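(* Let $p$ be a prime and $G=\mathbb{Z}\times\mathbb{Z}_p=\langle z\rangle\times\langle a\rangle$. If $\mathcal{S}$ is a Schur ring over $G$ such that $\langle a^iz\rangle$ is an $\mathcal{S}$-subgroup for some integer $i$, then $\mathcal{S}$ is an automorphic Schur ring.
   Context: $F$ is a field of characteristic $0$; $\mathbb{Z}=\langle z\rangle$ infinite cyclic, $\mathbb{Z}_p=\langle a\rangle$ cyclic of order $p$, written multiplicatively. For finite $C\subseteq G$, $\overline{C}=\sum_{g\in C}g$ and $C^*=\{g^{-1}:g\in C\}$. A Schur ring over $G$ is a subspace $\mathcal{S}=\mathrm{Span}_F\{\overline{C}:C\in\mathcal{D}\}$ of $F[G]$, where $\mathcal{D}$ is a partition of $G$ into finite subsets with $\{1\}\in\mathcal{D}$, $C\in\mathcal{D}\Rightarrow C^*\in\mathcal{D}$, and each $\overline{C}\,\overline{D}$ a finite $F$-linear combination of the $\overline{E}$, $E\in\mathcal{D}$. An $\mathcal{S}$-subgroup is a subgroup that is a union of members of $\mathcal{D}$. $\mathcal{S}$ is automorphic if $\mathcal{S}=F[G]^{\mathcal{H}}$ (elements fixed by $\mathcal{H}$; classes are the $\mathcal{H}$-orbits) for some finite $\mathcal{H}\le\operatorname{Aut}(G)$. *)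

theory Defs
  imports "HOL-Algebra.Algebra" "HOL-Library.Disjoint_Sets"
begin

text \<open>Elements of the group algebra F[G] are finitely supported functions
  from the carrier of G to F (extended by 0 outside the carrier).\<close>

definition group_algebra :: "('g, 'm) monoid_scheme \<Rightarrow> ('g \<Rightarrow> 'f::field) set" where
  "group_algebra G = {x. finite {g. x g \<noteq> 0} \<and> {g. x g \<noteq> 0} \<subseteq> carrier G}"

definition class_sum :: "'g set \<Rightarrow> 'g \<Rightarrow> 'f::field" where
  "class_sum C = (\<lambda>g. if g \<in> C then 1 else 0)"

definition class_prod :: "('g, 'm) monoid_scheme \<Rightarrow> 'g set \<Rightarrow> 'g set \<Rightarrow> 'g \<Rightarrow> 'f::field" where
  "class_prod G C D = (\<lambda>g. \<Sum>c\<in>C. \<Sum>d\<in>D. if c \<otimes>\<^bsub>G\<^esub> d = g then 1 else 0)"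

definition schur_span :: "'f itself \<Rightarrow> 'g set set \<Rightarrow> ('g \<Rightarrow> 'f::field) set" where
  "schur_span TYPE('f) \<D> = {x. \<exists>Cs (c :: 'g set \<Rightarrow> 'f). finite Cs \<and> Cs \<subseteq> \<D> \<and>
      x = (\<lambda>g. \<Sum>C\<in>Cs. c C * class_sum C g)}"

text \<open>D is the partition of a Schur ring over G (with coefficients in F);
  the Schur ring itself is schur_span TYPE('f) D.\<close>

definition schur_partition :: "'f::field itself \<Rightarrow> ('g, 'm) monoid_scheme \<Rightarrow> 'g set set \<Rightarrow> bool" where
  "schur_partition TYPE('f) G \<D> \<longleftrightarrow>
     partition_on (carrier G) \<D> \<and>
     (\<forall>C\<in>\<D>. finite C) \<and>
     {\<one>\<^bsub>G\<^esub>} \<in> \<D> \<and>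
     (\<forall>C\<in>\<D>. (\<lambda>g. inv\<^bsub>G\<^esub> g) ` C \<in> \<D>) \<and>
     (\<forall>C\<in>\<D>. \<forall>D\<in>\<D>. (class_prod G C D :: 'g \<Rightarrow> 'f) \<in> schur_span TYPE('f) \<D>)"

definition S_subgroup :: "('g, 'm) monoid_scheme \<Rightarrow> 'g set set \<Rightarrow> 'g set \<Rightarrow> bool" where
  "S_subgroup G \<D> K \<longleftrightarrow> subgroup K G \<and> (\<exists>Ds\<subseteq>\<D>. K = \<Union>Ds)"

definition fixed_space :: "'f itself \<Rightarrow> ('g, 'm) monoid_scheme \<Rightarrow> ('g \<Rightarrow> 'g) set \<Rightarrow> ('g \<Rightarrow> 'f::field) set" where
  "fixed_space TYPE('f) G H = {x \<in> group_algebra G. \<forall>\<sigma>\<in>H. \<forall>g\<in>carrier G. x (\<sigma> g) = x g}"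

definition automorphic_schur :: "'f::field itself \<Rightarrow> ('g, 'm) monoid_scheme \<Rightarrow> 'g set set \<Rightarrow> bool" where
  "automorphic_schur TYPE('f) G \<D> \<longleftrightarrow>
     (\<exists>H. finite H \<and> subgroup H (AutoGroup G) \<and>
          schur_span TYPE('f) \<D> = fixed_space TYPE('f) G H)"

text \<open>G = Z x Z_p, written additively in the components: z = (1,0), a = (0,1).\<close>

definition ZxZp :: "nat \<Rightarrow> (int \<times> int) monoid" where
  "ZxZp p = integer_group \<times>\<times> integer_mod_group p"

end

theory Submission
  imports Defs "HOL-Number_Theory.Cong"
begin

definition Gc :: "int \<Rightarrow> (int \<times> int) set" where
  "Gc P = UNIV \<times> {0..<P}"

definition subp :: "int \<Rightarrow> int \<times> int \<Rightarrow> int \<times> int \<Rightarrow> int \<times> int" where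
  "subp P g c = (fst g - fst c, (snd g - snd c) mod P)"

definition addp :: "int \<Rightarrow> int \<times> int \<Rightarrow> int \<times> int \<Rightarrow> int \<times> int" where
  "addp P g c = (fst g + fst c, (snd g + snd c) mod P)"

definition negp :: "int \<Rightarrow> int \<times> int \<Rightarrow> int \<times> int" where
  "negp P g = (- fst g, (- snd g) mod P)"

definition mu :: "int \<Rightarrow> int \<Rightarrow> int \<times> int \<Rightarrow> int \<times> int" where
  "mu P m g = (m * fst g, (m * snd g) mod P)"

definition sg :: "int \<Rightarrow> int \<Rightarrow> int \<Rightarrow> int \<times> int \<Rightarrow> int \<times> int" where
  "sg P e u g = (e * fst g, (u * snd g) mod P)"

definition cnt :: "int \<Rightarrow> (int \<times> int) set \<Rightarrow> (int \<times> int) set \<Rightarrow> int \<times> int \<Rightarrow> nat" where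
  "cnt P C E g = card {c\<in>C. subp P g c \<in> E}"

definition sh :: "int \<times> int \<Rightarrow> int \<times> int" where
  "sh g = (fst g + sgn (fst g), snd g)"

definition shd :: "int \<times> int \<Rightarrow> int \<times> int" where
  "shd g = (fst g - sgn (fst g), snd g)"

locale zsr =
  fixes P :: int and D :: "(int \<times> int) set set"
  assumes P_prime: "Factorial_Ring.prime P"
    and part: "partition_on (Gc P) D"
    and fin: "\<And>C. C \<in> D \<Longrightarrow> finite C"
    and zero: "{(0,0)} \<in> D"
    and negcl: "\<And>C. C \<in> D \<Longrightarrow> negp P ` C \<in> D"
    and prodc: "\<And>C E W g g'. C \<in> D \<Longrightarrow> E \<in> D \<Longrightarrow> W \<in> D \<Longrightarrow> g \<in> W \<Longrightarrow> g' \<in> W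
                 \<Longrightarrow> cnt P C E g = cnt P C E g'"
    and Tcl: "\<And>C g g'. C \<in> D \<Longrightarrow> g \<in> C \<Longrightarrow> g' \<in> C \<Longrightarrow> snd g = 0 \<Longrightarrow> snd g' = 0"
begin

lemma P_gt1: "P > 1" using P_prime prime_gt_1_int by blast
lemma P_pos: "P > 0" using P_gt1 by simp

lemma D_sub: "C \<in> D \<Longrightarrow> C \<subseteq> Gc P"
  using part unfolding partition_on_def by auto

lemma D_ne: "C \<in> D \<Longrightarrow> C \<noteq> {}"
  using part unfolding partition_on_def by auto

lemma D_disj: "C \<in> D \<Longrightarrow> C' \<in> D \<Longrightarrow> g \<in> C \<Longrightarrow> g \<in> C' \<Longrightarrow> C = C'"
  using part unfolding partition_on_def disjoint_def by blast

lemma D_cover: "g \<in> Gc P \<Longrightarrow> \<exists>C\<in>D. g \<in> C"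
  using part unfolding partition_on_def by auto

definition cls :: "int \<times> int \<Rightarrow> (int \<times> int) set" where
  "cls g = (THE C. C \<in> D \<and> g \<in> C)"

lemma cls_eq: "C \<in> D \<Longrightarrow> g \<in> C \<Longrightarrow> cls g = C"
  unfolding cls_def by (rule the_equality) (use D_disj in blast)+

lemma cls_D: "g \<in> Gc P \<Longrightarrow> cls g \<in> D"
  using D_cover cls_eq by metis

lemma cls_mem: "g \<in> Gc P \<Longrightarrow> g \<in> cls g"
  using D_cover cls_eq by metis

lemma cls_sub: "g \<in> Gc P \<Longrightarrow> cls g \<subseteq> Gc P"
  using cls_D D_sub by blast

lemma cls_fin: "g \<in> Gc P \<Longrightarrow> finite (cls g)"
  using cls_D fin by blast

lemma cls_same: "g \<in> Gc P \<Longrightarrow> g' \<in> cls g \<Longrightarrow> cls g' = cls g"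
  using cls_D cls_eq by blast

lemma cls_sym: "g \<in> Gc P \<Longrightarrow> g' \<in> cls g \<Longrightarrow> g \<in> cls g'"
  using cls_same cls_mem by metis

lemma Gc_iff: "g \<in> Gc P \<longleftrightarrow> 0 \<le> snd g \<and> snd g < P"
  unfolding Gc_def by (cases g) auto

lemma cls0: "cls (0,0) = {(0,0)}"
  using cls_eq zero by blast

lemma cnt_const: "C \<in> D \<Longrightarrow> E \<in> D \<Longrightarrow> g \<in> Gc P \<Longrightarrow> g' \<in> cls g \<Longrightarrow> cnt P C E g' = cnt P C E g"
  using prodc[of C E "cls g" g' g] cls_D cls_mem by blast

end

lemma rotate_mult_fix:
  assumes "rotate k xs = xs" shows "rotate (k * t) xs = xs"
proof (induction t)
  case 0 then show ?case by simp
next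
  case (Suc t)
  have "rotate (k * Suc t) xs = rotate k (rotate (k * t) xs)"
    by (simp add: rotate_rotate add.commute)
  then show ?case using Suc assms by simp
qed

lemma rotate_fix_const:
  assumes q: "Factorial_Ring.prime (q::nat)" and len: "length xs = q" and k: "0 < k" "k < q"
    and r: "rotate k xs = xs"
  shows "\<forall>y\<in>set xs. y = xs ! 0"
proof -
  have "\<not> q dvd k" using k by (simp add: nat_dvd_not_less)
  then have "coprime q k" by (rule prime_imp_coprime[OF q])
  then have "coprime k q" by (simp add: coprime_commute)
  then obtain t where t: "[k * t = Suc 0] (mod q)" using cong_solve_coprime_nat by blast
  have q1: "q > 1" using q prime_gt_1_nat by blast
  have A: "rotate (k * t) xs = xs" using rotate_mult_fix[OF r] .
  have "(k * t) mod q = 1" using t q1 unfolding cong_def by simp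
  then have B: "rotate (k * t) xs = rotate 1 xs"
    using len rotate_conv_mod[of "k*t" xs] by simp
  have r1: "rotate1 xs = xs" using A B by simp
  have step: "xs ! n = xs ! (Suc n mod q)" if "n < q" for n
    using nth_rotate1[of n xs] r1 len that by simp
  have "xs ! n = xs ! 0" if "n < q" for n
    using that
  proof (induction n)
    case 0 then show ?case by simp
  next
    case (Suc n)
    then have "n < q" by simp
    then have "xs ! n = xs ! (Suc n mod q)" by (rule step)
    moreover have "Suc n mod q = Suc n" using Suc.prems by simp
    ultimately show ?case using Suc by simp
  qed
  then show ?thesis using len by (auto simp: in_set_conv_nth)
qed

definition nonconst :: "'a list \<Rightarrow> bool" where
  "nonconst xs \<longleftrightarrow> \<not> (\<exists>c. \<forall>y\<in>set xs. y = c)"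

lemma rot_inj:
  assumes q: "Factorial_Ring.prime (q::nat)" and len: "length xs = q" and nc: "nonconst xs"
  shows "inj_on (\<lambda>k. rotate k xs) {..<q}"
proof (rule inj_onI)
  fix i j assume ij: "i \<in> {..<q}" "j \<in> {..<q}" "rotate i xs = rotate j xs"
  show "i = j"
  proof (rule ccontr)
    assume "i \<noteq> j"
    then consider "i < j" | "j < i" by linarith
    then show False
    proof cases
      case 1
      have "rotate (j - i) (rotate i xs) = rotate j xs" using 1 by (simp add: rotate_rotate)
      then have "rotate (j - i) (rotate i xs) = rotate i xs" using ij by simp
      moreover have "length (rotate i xs) = q" using len by simp
      moreover have "0 < j - i" "j - i < q" using 1 ij by auto
      ultimately have "\<forall>y\<in>set (rotate i xs). y = rotate i xs ! 0"
        using rotate_fix_const[OF q, of "rotate i xs" "j - i"] by blast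
      then show False using nc unfolding nonconst_def by auto
    next
      case 2
      have "rotate (i - j) (rotate j xs) = rotate i xs" using 2 by (simp add: rotate_rotate)
      then have "rotate (i - j) (rotate j xs) = rotate j xs" using ij by simp
      moreover have "length (rotate j xs) = q" using len by simp
      moreover have "0 < i - j" "i - j < q" using 2 ij by auto
      ultimately have "\<forall>y\<in>set (rotate j xs). y = rotate j xs ! 0"
        using rotate_fix_const[OF q, of "rotate j xs" "i - j"] by blast
      then show False using nc unfolding nonconst_def by auto
    qed
  qed
qed

definition orb :: "nat \<Rightarrow> 'a list \<Rightarrow> 'a list set" where
  "orb q xs = (\<lambda>k. rotate k xs) ` {..<q}"

lemma orb_eq:
  assumes len: "length xs = q" and q: "q > 0" and ys: "ys \<in> orb q xs"
  shows "orb q ys = orb q xs"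
proof -
  obtain i where i: "i < q" "ys = rotate i xs" using ys unfolding orb_def by auto
  show ?thesis
  proof
    show "orb q ys \<subseteq> orb q xs"
    proof
      fix zs assume "zs \<in> orb q ys"
      then obtain k where k: "k < q" "zs = rotate k ys" unfolding orb_def by auto
      then have "zs = rotate (k + i) xs" using i by (simp add: rotate_rotate)
      then have "zs = rotate ((k + i) mod q) xs"
        using len rotate_conv_mod[of "k+i" xs] by simp
      then show "zs \<in> orb q xs" unfolding orb_def using q by auto
    qed
  next
    show "orb q xs \<subseteq> orb q ys"
    proof
      fix zs assume "zs \<in> orb q xs"
      then obtain k where k: "k < q" "zs = rotate k xs" unfolding orb_def by auto
      have "rotate ((k + q - i) mod q) ys = rotate (k + q - i) ys"
        using i len rotate_conv_mod[of "k + q - i" ys] by simp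
      also have "\<dots> = rotate (k + q - i + i) xs" using i by (simp add: rotate_rotate)
      also have "\<dots> = rotate (k + q) xs" using i by simp
      also have "\<dots> = rotate ((k + q) mod q) xs" using len rotate_conv_mod[of "k+q" xs] by simp
      also have "\<dots> = zs" using k by simp
      finally have "zs = rotate ((k + q - i) mod q) ys" by simp
      moreover have "(k + q - i) mod q < q" using q by simp
      ultimately show "zs \<in> orb q ys" unfolding orb_def by blast
    qed
  qed
qed

lemma rot_dvd:
  assumes q: "Factorial_Ring.prime (q::nat)" and fin: "finite S"
    and hS: "\<And>xs. xs \<in> S \<Longrightarrow> length xs = q \<and> nonconst xs"
    and cl: "\<And>xs. xs \<in> S \<Longrightarrow> rotate1 xs \<in> S"
  shows "q dvd card S"
proof -
  have q0: "q > 0" using q prime_gt_0_nat by blast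
  have clk: "rotate k xs \<in> S" if "xs \<in> S" for k xs
    using that by (induction k) (auto intro: cl)
  have S_eq: "S = \<Union> (orb q ` S)"
  proof
    show "S \<subseteq> \<Union> (orb q ` S)"
    proof
      fix xs assume "xs \<in> S"
      moreover have "xs \<in> orb q xs" unfolding orb_def using q0 by (auto intro!: image_eqI[where x=0])
      ultimately show "xs \<in> \<Union> (orb q ` S)" by blast
    qed
    show "\<Union> (orb q ` S) \<subseteq> S" unfolding orb_def using clk by auto
  qed
  have "q dvd card (\<Union> (orb q ` S))"
  proof (rule dvd_partition)
    show "finite (\<Union> (orb q ` S))" using S_eq fin by simp
    show "\<forall>c\<in>orb q ` S. q dvd card c"
    proof
      fix c assume "c \<in> orb q ` S"
      then obtain xs where xs: "xs \<in> S" "c = orb q xs" by auto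
      have "inj_on (\<lambda>k. rotate k xs) {..<q}" using rot_inj[OF q] hS xs by blast
      then have "card c = q" using xs card_image unfolding orb_def by fastforce
      then show "q dvd card c" by simp
    qed
    show "\<forall>c1\<in>orb q ` S. \<forall>c2\<in>orb q ` S. c1 \<noteq> c2 \<longrightarrow> c1 \<inter> c2 = {}"
    proof (intro ballI impI)
      fix c1 c2 assume c: "c1 \<in> orb q ` S" "c2 \<in> orb q ` S" "c1 \<noteq> c2"
      then obtain xs ys where xy: "xs \<in> S" "ys \<in> S" "c1 = orb q xs" "c2 = orb q ys" by auto
      show "c1 \<inter> c2 = {}"
      proof (rule ccontr)
        assume "c1 \<inter> c2 \<noteq> {}"
        then obtain zs where "zs \<in> orb q xs" "zs \<in> orb q ys" using xy by auto
        then have "orb q zs = orb q xs" "orb q zs = orb q ys"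
          using orb_eq[of xs q zs] orb_eq[of ys q zs] hS xy q0 by auto
        then show False using c xy by simp
      qed
    qed
  qed
  then show ?thesis using S_eq by simp
qed


definition lsum :: "int \<Rightarrow> (int \<times> int) list \<Rightarrow> int \<times> int" where
  "lsum P xs = (sum_list (map fst xs), sum_list (map snd xs) mod P)"

definition tup :: "int \<Rightarrow> nat \<Rightarrow> (int \<times> int) set \<Rightarrow> int \<times> int \<Rightarrow> (int \<times> int) list set" where
  "tup P r C g = {xs. length xs = r \<and> set xs \<subseteq> C \<and> lsum P xs = g}"

lemma sum_list_rotate1: "sum_list (map f (rotate1 xs)) = sum_list (map f xs)"
  for f :: "'a \<Rightarrow> 'b::comm_monoid_add"
  by (cases xs) (simp_all add: add.commute)

lemma lsum_rotate1: "lsum P (rotate1 xs) = lsum P xs"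
  unfolding lsum_def by (simp only: sum_list_rotate1)

lemma tup_fin: "finite C \<Longrightarrow> finite (tup P r C g)"
  unfolding tup_def
  by (rule finite_subset[OF _ finite_lists_length_eq[of C r]]) auto

lemma nonconst_rotate1: "nonconst (rotate1 xs) = nonconst xs"
  unfolding nonconst_def by simp

lemma sum_list_replicate': "sum_list (replicate n (c::int)) = int n * c"
  by (induction n) (auto simp: algebra_simps)

context zsr
begin

lemma subp_Gc: "subp P g c \<in> Gc P"
  unfolding subp_def Gc_def using P_pos by auto

lemma lsum_Gc: "lsum P xs \<in> Gc P"
  unfolding lsum_def Gc_def using P_pos by auto

lemma lsum_Cons_iff:
  assumes "g \<in> Gc P"
  shows "lsum P (c # ys) = g \<longleftrightarrow> lsum P ys = subp P g c"
proof -
  have g2: "snd g mod P = snd g" using assms unfolding Gc_def by auto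
  have "(snd c + sum_list (map snd ys)) mod P = snd g \<longleftrightarrow>
        sum_list (map snd ys) mod P = (snd g - snd c) mod P"
  proof -
    have "(snd c + sum_list (map snd ys)) mod P = snd g \<longleftrightarrow>
          (snd c + sum_list (map snd ys)) mod P = snd g mod P" using g2 by simp
    also have "\<dots> \<longleftrightarrow> P dvd (snd c + sum_list (map snd ys)) - snd g" by (rule mod_eq_dvd_iff)
    also have "\<dots> \<longleftrightarrow> P dvd sum_list (map snd ys) - (snd g - snd c)" by (simp add: algebra_simps)
    also have "\<dots> \<longleftrightarrow> sum_list (map snd ys) mod P = (snd g - snd c) mod P" by (rule mod_eq_dvd_iff[symmetric])
    finally show ?thesis .
  qed
  then show ?thesis unfolding lsum_def subp_def by (cases g) auto
qed

lemma tup_Suc: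
  assumes C: "finite C" and g: "g \<in> Gc P"
  shows "card (tup P (Suc r) C g) = (\<Sum>c\<in>C. card (tup P r C (subp P g c)))"
proof -
  have eq: "tup P (Suc r) C g = (\<Union>c\<in>C. (#) c ` tup P r C (subp P g c))"
  proof
    show "tup P (Suc r) C g \<subseteq> (\<Union>c\<in>C. (#) c ` tup P r C (subp P g c))"
    proof
      fix xs assume xs: "xs \<in> tup P (Suc r) C g"
      then obtain c ys where cy: "xs = c # ys" unfolding tup_def by (cases xs) auto
      then show "xs \<in> (\<Union>c\<in>C. (#) c ` tup P r C (subp P g c))"
        using xs lsum_Cons_iff[OF g] unfolding tup_def by auto
    qed
    show "(\<Union>c\<in>C. (#) c ` tup P r C (subp P g c)) \<subseteq> tup P (Suc r) C g"
      using lsum_Cons_iff[OF g] unfolding tup_def by auto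
  qed
  have "card (\<Union>c\<in>C. (#) c ` tup P r C (subp P g c)) = (\<Sum>c\<in>C. card ((#) c ` tup P r C (subp P g c)))"
    by (rule card_UN_disjoint) (auto simp: C tup_fin)
  also have "\<dots> = (\<Sum>c\<in>C. card (tup P r C (subp P g c)))"
    by (rule sum.cong) (auto intro: card_image inj_onI)
  finally show ?thesis using eq by simp
qed

lemma gen_const:
  fixes f :: "int \<times> int \<Rightarrow> nat"
  assumes C: "C \<in> D" and F: "finite F" "F \<subseteq> Gc P" and fF: "\<And>y. f y \<noteq> 0 \<Longrightarrow> y \<in> F"
    and fc: "\<And>y y'. y \<in> Gc P \<Longrightarrow> y' \<in> cls y \<Longrightarrow> f y' = f y"
    and g: "g \<in> Gc P" "g' \<in> cls g"
  shows "(\<Sum>c\<in>C. f (subp P g' c)) = (\<Sum>c\<in>C. f (subp P g c))"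
proof -
  define Es where "Es = cls ` F"
  define fE where "fE E = f (SOME e. e \<in> E)" for E
  have EsD: "Es \<subseteq> D" unfolding Es_def using F cls_D by auto
  have finEs: "finite Es" unfolding Es_def using F by simp
  have finC: "finite C" using C fin by blast
  have rep: "f y = (\<Sum>E\<in>Es. if y \<in> E then fE E else 0)" if y: "y \<in> Gc P" for y
  proof (cases "\<exists>E\<in>Es. y \<in> E")
    case True
    then obtain E where E: "E \<in> Es" "y \<in> E" by blast
    have "(\<Sum>E'\<in>Es. if y \<in> E' then fE E' else 0) = (\<Sum>E'\<in>Es. if E' = E then fE E else 0)"
    proof (rule sum.cong[OF refl])
      fix E' assume "E' \<in> Es"
      then have "y \<in> E' \<longleftrightarrow> E' = E" using E EsD D_disj by blast
      then show "(if y \<in> E' then fE E' else 0) = (if E' = E then fE E else 0)" by simp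
    qed
    also have "\<dots> = fE E" using E finEs by simp
    also have "\<dots> = f y"
    proof -
      have cE: "cls y = E" using E EsD cls_eq by blast
      have "(SOME e. e \<in> E) \<in> E" using E by (metis someI_ex)
      then show ?thesis unfolding fE_def using fc[OF y] cE by simp
    qed
    finally show ?thesis by simp
  next
    case False
    then have "f y = 0" using fF cls_mem F unfolding Es_def by blast
    moreover have "(\<Sum>E\<in>Es. if y \<in> E then fE E else 0) = 0" using False by (intro sum.neutral) auto
    ultimately show ?thesis by simp
  qed
  have expand: "(\<Sum>c\<in>C. f (subp P x c)) = (\<Sum>E\<in>Es. fE E * cnt P C E x)" for x
  proof -
    have "(\<Sum>c\<in>C. f (subp P x c)) = (\<Sum>c\<in>C. \<Sum>E\<in>Es. if subp P x c \<in> E then fE E else 0)"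
      using rep subp_Gc by simp
    also have "\<dots> = (\<Sum>E\<in>Es. \<Sum>c\<in>C. if subp P x c \<in> E then fE E else 0)" by (rule sum.swap)
    also have "\<dots> = (\<Sum>E\<in>Es. fE E * cnt P C E x)"
    proof (rule sum.cong[OF refl])
      fix E
      have "(\<Sum>c\<in>C. if subp P x c \<in> E then fE E else 0) = (\<Sum>c\<in>{c\<in>C. subp P x c \<in> E}. fE E)"
        using sum.inter_filter[OF finC, of "\<lambda>_. fE E" "\<lambda>c. subp P x c \<in> E"] by simp
      also have "\<dots> = fE E * cnt P C E x" unfolding cnt_def by (simp add: mult.commute)
      finally show "(\<Sum>c\<in>C. if subp P x c \<in> E then fE E else 0) = fE E * cnt P C E x" .
    qed
    finally show ?thesis .
  qed
  have "(\<Sum>E\<in>Es. fE E * cnt P C E g') = (\<Sum>E\<in>Es. fE E * cnt P C E g)"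
    by (rule sum.cong[OF refl]) (use cnt_const[OF C _ g] EsD in auto)
  then show ?thesis using expand by simp
qed

lemma tcount_const:
  assumes C: "C \<in> D"
  shows "g \<in> Gc P \<Longrightarrow> g' \<in> cls g \<Longrightarrow> card (tup P r C g') = card (tup P r C g)"
proof (induction r arbitrary: g g')
  case 0
  have t0: "tup P 0 C x = (if x = (0,0) then {[]} else {})" for x
    unfolding tup_def lsum_def by auto
  have "g' = (0,0) \<longleftrightarrow> g = (0,0)"
    using 0 cls0 cls_same by (metis Gc_iff cls_mem singletonD)
  then show ?case using t0 by simp
next
  case (Suc r)
  have finC: "finite C" using C fin by blast
  have g'G: "g' \<in> Gc P" using Suc.prems cls_sub by blast
  define F where "F = lsum P ` {xs. set xs \<subseteq> C \<and> length xs = r}"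
  have "card (tup P (Suc r) C g') = (\<Sum>c\<in>C. card (tup P r C (subp P g' c)))"
    using tup_Suc[OF finC g'G] .
  also have "\<dots> = (\<Sum>c\<in>C. card (tup P r C (subp P g c)))"
  proof (rule gen_const[OF C, of F])
    show "finite F" unfolding F_def using finite_lists_length_eq[OF finC] by simp
    show "F \<subseteq> Gc P" unfolding F_def using lsum_Gc by auto
    show "y \<in> F" if "card (tup P r C y) \<noteq> 0" for y
    proof -
      from that have "tup P r C y \<noteq> {}" by auto
      then show ?thesis unfolding F_def tup_def by auto
    qed
    show "card (tup P r C y') = card (tup P r C y)" if "y \<in> Gc P" "y' \<in> cls y" for y y'
      using Suc.IH that by blast
  qed (use Suc.prems in auto)
  also have "\<dots> = card (tup P (Suc r) C g)"
    using tup_Suc[OF finC Suc.prems(1)] by simp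
  finally show ?case .
qed

lemma frob_mod:
  assumes q: "Factorial_Ring.prime (q::nat)" and C: "C \<in> D"
    and inj: "inj_on (mu P (int q)) C" and g: "g \<in> Gc P"
  shows "card (tup P q C g) mod q = (if g \<in> mu P (int q) ` C then 1 else 0)"
proof -
  have q1: "q > 1" using q prime_gt_1_nat by blast
  then have q0: "q > 0" by simp
  have finC: "finite C" using C fin by blast
  define S where "S = tup P q C g"
  define Con where "Con = {xs\<in>S. \<not> nonconst xs}"
  define Non where "Non = {xs\<in>S. nonconst xs}"
  have finS: "finite S" unfolding S_def using tup_fin finC by blast
  have cardS: "card S = card Con + card Non"
  proof -
    have "S = Con \<union> Non" "Con \<inter> Non = {}" unfolding Con_def Non_def by auto
    then show ?thesis using finS card_Un_disjoint[of Con Non]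
      by (metis finite_Un)
  qed
  have dvdN: "q dvd card Non"
  proof (rule rot_dvd[OF q])
    show "finite Non" using finS unfolding Non_def by simp
    show "length xs = q \<and> nonconst xs" if "xs \<in> Non" for xs
      using that unfolding Non_def S_def tup_def by auto
    show "rotate1 xs \<in> Non" if "xs \<in> Non" for xs
      using that unfolding Non_def S_def tup_def by (auto simp: lsum_rotate1 nonconst_rotate1)
  qed
  have lrep: "lsum P (replicate q c) = mu P (int q) c" for c
    unfolding lsum_def mu_def by (simp add: sum_list_replicate')
  have ConEq: "Con = (\<lambda>c. replicate q c) ` {c\<in>C. mu P (int q) c = g}"
  proof
    show "Con \<subseteq> (\<lambda>c. replicate q c) ` {c\<in>C. mu P (int q) c = g}"
    proof
      fix xs assume xs: "xs \<in> Con"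
      then obtain c where c: "\<forall>y\<in>set xs. y = c" unfolding Con_def nonconst_def by auto
      have len: "length xs = q" and sC: "set xs \<subseteq> C" and ls: "lsum P xs = g"
        using xs unfolding Con_def S_def tup_def by auto
      have xr: "xs = replicate q c" using replicate_length_same[OF c] len by simp
      have "c \<in> C" using sC xr q0 by (cases q) auto
      then show "xs \<in> (\<lambda>c. replicate q c) ` {c\<in>C. mu P (int q) c = g}"
        using xr ls lrep by auto
    qed
    show "(\<lambda>c. replicate q c) ` {c\<in>C. mu P (int q) c = g} \<subseteq> Con"
      unfolding Con_def S_def tup_def nonconst_def using lrep by auto
  qed
  have injr: "inj_on (\<lambda>c. replicate q c) Xs" for Xs using q0 by (auto intro: inj_onI)
  have cardCon: "card Con = (if g \<in> mu P (int q) ` C then 1 else 0)"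
  proof (cases "g \<in> mu P (int q) ` C")
    case True
    then obtain c0 where c0: "c0 \<in> C" "mu P (int q) c0 = g" by auto
    have "{c\<in>C. mu P (int q) c = g} = {c0}" using c0 inj unfolding inj_on_def by auto
    then show ?thesis using ConEq True by simp
  next
    case False
    then have "{c\<in>C. mu P (int q) c = g} = {}" by auto
    then have "Con = {}" using ConEq by simp
    then show ?thesis using False by simp
  qed
  have "card S mod q = card Con mod q" using cardS dvdN by (simp add: mod_add_right_eq[symmetric])
  also have "\<dots> = card Con" using cardCon q1 by simp
  finally show ?thesis using cardCon S_def by simp
qed

lemma frob_closed:
  assumes q: "Factorial_Ring.prime (q::nat)" and C: "C \<in> D"
    and inj: "inj_on (mu P (int q)) C" and g: "g \<in> Gc P" and g': "g' \<in> cls g"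
  shows "g' \<in> mu P (int q) ` C \<longleftrightarrow> g \<in> mu P (int q) ` C"
proof -
  have g'G: "g' \<in> Gc P" using g g' cls_sub by blast
  have "card (tup P q C g') = card (tup P q C g)" using tcount_const[OF C g g'] .
  then have "(if g' \<in> mu P (int q) ` C then 1 else 0) = (if g \<in> mu P (int q) ` C then 1 else (0::nat))"
    using frob_mod[OF q C inj g] frob_mod[OF q C inj g'G] by simp
  then show ?thesis by (auto split: if_splits)
qed

end

context zsr
begin

definition closed :: "(int \<times> int) set \<Rightarrow> bool" where
  "closed S \<longleftrightarrow> S \<subseteq> Gc P \<and> (\<forall>g\<in>S. \<forall>g'\<in>cls g. g' \<in> S)"

lemma closed_cls: "g \<in> Gc P \<Longrightarrow> closed (cls g)"
  unfolding closed_def using cls_sub cls_same cls_mem by metis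

lemma mu_Gc: "mu P m g \<in> Gc P"
  unfolding mu_def Gc_def using P_pos by auto

lemma mu1: "g \<in> Gc P \<Longrightarrow> mu P 1 g = g"
  unfolding mu_def Gc_def by (cases g) auto

lemma mu_mult: "mu P (a * b) g = mu P a (mu P b g)"
  unfolding mu_def by (simp add: mod_mult_right_eq mult.assoc)

lemma mu_inj_coprime:
  assumes "\<not> P dvd m" "x \<in> Gc P" "y \<in> Gc P" "mu P m x = mu P m y" "m \<noteq> 0"
  shows "x = y"
proof -
  have f: "fst x = fst y" using assms unfolding mu_def by auto
  have "(m * snd x) mod P = (m * snd y) mod P" using assms unfolding mu_def by auto
  then have "P dvd m * (snd x - snd y)" by (simp add: mod_eq_dvd_iff algebra_simps)
  then have "P dvd (snd x - snd y)" using assms(1) P_prime by (simp add: prime_dvd_mult_iff)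
  then have "snd x mod P = snd y mod P" by (simp add: mod_eq_dvd_iff)
  moreover have "snd x mod P = snd x" "snd y mod P = snd y" using assms unfolding Gc_def by auto
  ultimately show ?thesis using f by (simp add: prod_eq_iff)
qed

lemma mu_inj_T:
  assumes "snd x = 0" "snd y = 0" "mu P m x = mu P m y" "m \<noteq> 0"
  shows "x = y"
  using assms unfolding mu_def by (simp add: prod_eq_iff)

definition Tset :: "(int \<times> int) set" where "Tset = {g. snd g = 0}"

lemma cls_T: "g \<in> Gc P \<Longrightarrow> snd g = 0 \<Longrightarrow> cls g \<subseteq> Tset"
  unfolding Tset_def using Tcl cls_D cls_mem by blast

lemma prime_step:
  assumes q: "Factorial_Ring.prime (q::nat)" and S: "closed S"
    and cond: "\<not> P dvd int q \<or> S \<subseteq> Tset"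
  shows "closed (mu P (int q) ` S)"
  unfolding closed_def
proof (intro conjI ballI)
  show "mu P (int q) ` S \<subseteq> Gc P" using mu_Gc by auto
  fix g g' assume g: "g \<in> mu P (int q) ` S" and g': "g' \<in> cls g"
  obtain s where s: "s \<in> S" "g = mu P (int q) s" using g by auto
  have sG: "s \<in> Gc P" using S s unfolding closed_def by auto
  have CS: "cls s \<subseteq> S" using S s cls_mem sG unfolding closed_def by blast
  have q0: "int q \<noteq> 0" using q by auto
  have inj: "inj_on (mu P (int q)) (cls s)"
  proof (rule inj_onI)
    fix x y assume xy: "x \<in> cls s" "y \<in> cls s" "mu P (int q) x = mu P (int q) y"
    show "x = y"
    proof (cases "\<not> P dvd int q")
      case True then show ?thesis using mu_inj_coprime xy cls_sub sG q0 by blast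
    next
      case False
      then have "S \<subseteq> Tset" using cond by simp
      then show ?thesis using mu_inj_T xy CS q0 unfolding Tset_def by blast
    qed
  qed
  have gG: "g \<in> Gc P" using s mu_Gc by simp
  have "g \<in> mu P (int q) ` cls s" using s sG cls_mem by blast
  then have "g' \<in> mu P (int q) ` cls s"
    using frob_closed[OF q cls_D[OF sG] inj gG g'] by simp
  then show "g' \<in> mu P (int q) ` S" using CS by blast
qed

lemma mult_closed:
  assumes "m \<ge> (1::nat)" and S: "closed S" and cond: "coprime (int m) P \<or> S \<subseteq> Tset"
  shows "closed (mu P (int m) ` S)"
  using assms(1) cond
proof (induction m rule: less_induct)
  case (less m)
  show ?case
  proof (cases "m = 1")
    case True
    have "mu P (int m) ` S = S"
    proof -
      have "mu P 1 ` S = S" using S mu1 unfolding closed_def by (auto simp: image_iff) (metis subsetD mu1)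
      then show ?thesis using True by simp
    qed
    then show ?thesis using S by simp
  next
    case False
    then obtain q where q: "Factorial_Ring.prime q" "q dvd m" using prime_factor_nat by blast
    then obtain m' where m': "m = q * m'" by blast
    have m'1: "m' \<ge> 1" using less.prems m' by (cases m') auto
    have q1: "q > 1" using q prime_gt_1_nat by blast
    have m'lt: "m' < m" using m' q1 m'1 by simp
    have cond': "coprime (int m') P \<or> S \<subseteq> Tset"
      using less.prems(2) m' by (auto simp: coprime_mult_left_iff)
    have IH: "closed (mu P (int m') ` S)" using less.IH[OF m'lt m'1 cond'] .
    have cq: "\<not> P dvd int q \<or> mu P (int m') ` S \<subseteq> Tset"
    proof (cases "S \<subseteq> Tset")
      case True then show ?thesis unfolding Tset_def mu_def by auto
    next
      case False
      then have "coprime (int m) P" using less.prems(2) by simp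
      then have "coprime (int q) P" using m' by (simp add: coprime_mult_left_iff)
      have "\<not> P dvd int q"
      proof
        assume "P dvd int q"
        then have "is_unit P" using coprime_common_divisor[OF \<open>coprime (int q) P\<close>] by auto
        then show False using P_gt1 by simp
      qed
      then show ?thesis by simp
    qed
    have "closed (mu P (int q) ` (mu P (int m') ` S))" using prime_step[OF q(1) IH cq] .
    moreover have "mu P (int q) ` (mu P (int m') ` S) = mu P (int m) ` S"
      using m' by (auto simp: image_image mu_mult[symmetric] mult.commute)
    ultimately show ?thesis by simp
  qed
qed

lemma mult_cls:
  assumes "m \<ge> (1::nat)" and g: "g \<in> Gc P" and cond: "coprime (int m) P \<or> cls g \<subseteq> Tset"
  shows "cls (mu P (int m) g) \<subseteq> mu P (int m) ` cls g"
proof -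
  have c: "closed (mu P (int m) ` cls g)" using mult_closed[OF assms(1) closed_cls[OF g] cond] .
  have "mu P (int m) g \<in> mu P (int m) ` cls g" using cls_mem g by blast
  then show ?thesis using c unfolding closed_def by blast
qed

end

context zsr
begin

lemma negp_Gc: "negp P g \<in> Gc P"
  unfolding negp_def Gc_def using P_pos by auto

lemma negp_negp: "g \<in> Gc P \<Longrightarrow> negp P (negp P g) = g"
  unfolding negp_def Gc_def by (cases g) (auto simp: mod_minus_eq)

lemma negcls: "g \<in> Gc P \<Longrightarrow> cls (negp P g) = negp P ` cls g"
  using negcl[OF cls_D] cls_mem cls_eq by blast

lemma Gc_pair: "(a, k) \<in> Gc P \<longleftrightarrow> 0 \<le> k \<and> k < P"
  unfolding Gc_def by auto

lemma L_closed:
  assumes g: "g \<in> Gc P" "fst g = 0" and y: "y \<in> cls g"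
  shows "fst y = 0"
proof -
  define m where "m = nat (P + 1)"
  have m1: "m \<ge> 1" unfolding m_def using P_pos by simp
  have im: "int m = P + 1" unfolding m_def using P_pos by simp
  have cop: "coprime (int m) P" unfolding im by (rule coprime_add_one_left)
  have fixm: "mu P (int m) g = g"
    using g unfolding mu_def Gc_def im by (cases g) (auto simp: algebra_simps)
  have sub: "cls g \<subseteq> mu P (int m) ` cls g" using mult_cls[OF m1 g(1)] cop fixm by simp
  have main: "\<forall>y\<in>cls g. nat \<bar>fst y\<bar> < N \<longrightarrow> fst y = 0" for N
  proof (induction N)
    case 0 then show ?case by simp
  next
    case (Suc N)
    show ?case
    proof (intro ballI impI)
      fix y assume y: "y \<in> cls g" "nat \<bar>fst y\<bar> < Suc N"
      obtain z where z: "z \<in> cls g" "y = mu P (int m) z" using sub y by blast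
      have fy: "fst y = (P + 1) * fst z" using z unfolding mu_def im by simp
      show "fst y = 0"
      proof (cases "fst z = 0")
        case True then show ?thesis using fy by simp
      next
        case False
        have "\<bar>fst y\<bar> = (P + 1) * \<bar>fst z\<bar>" using fy P_pos by (simp add: abs_mult)
        moreover have "(P + 1) * \<bar>fst z\<bar> \<ge> 2 * \<bar>fst z\<bar>"
          using P_gt1 by (intro mult_right_mono) auto
        ultimately have "\<bar>fst z\<bar> < \<bar>fst y\<bar>" using False by linarith
        then have "nat \<bar>fst z\<bar> < N" using y by linarith
        then have "fst z = 0" using Suc.IH z by blast
        then show ?thesis using False by simp
      qed
    qed
  qed
  have "nat \<bar>fst y\<bar> < Suc (nat \<bar>fst y\<bar>)" by simp
  then show ?thesis using main y by blast
qed

lemma one0_G: "(1::int, 0::int) \<in> Gc P" using P_pos by (simp add: Gc_pair)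

lemma U_sub: "cls (1,0) \<subseteq> {(1,0), (-1,0)}"
proof
  fix y assume y: "y \<in> cls (1,0)"
  have UT: "cls (1,0) \<subseteq> Tset" using cls_T one0_G by simp
  then have sy: "snd y = 0" using y unfolding Tset_def by auto
  obtain c where yc: "y = (c, 0)" using sy by (cases y) auto
  have c0: "c \<noteq> 0"
  proof
    assume "c = 0"
    then have "(1,0) \<in> cls (0,0)" using cls_sym[OF one0_G] y yc by simp
    then show False using cls0 by simp
  qed
  have yU: "cls y = cls (1,0)" using cls_same[OF one0_G y] .
  show "y \<in> {(1,0), (-1,0)}"
  proof (cases "c > 0")
    case True
    define m where "m = nat c"
    have m1: "m \<ge> 1" and im: "int m = c" unfolding m_def using True by auto
    have "mu P (int m) (1,0) = y" unfolding mu_def im yc by simp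
    then have "cls y \<subseteq> mu P (int m) ` cls (1,0)" using mult_cls[OF m1 one0_G] UT by simp
    then have "(1,0) \<in> mu P (int m) ` cls (1,0)" using yU cls_mem one0_G by auto
    then obtain z where "(1::int) = c * fst z" unfolding mu_def im by auto
    then have "c * fst z = 1" by simp
    then have "c = 1" using pos_zmult_eq_1_iff[OF True] by simp
    then show ?thesis using yc by simp
  next
    case False
    then have cneg: "c < 0" using c0 by simp
    define m where "m = nat (- c)"
    have m1: "m \<ge> 1" and im: "int m = - c" unfolding m_def using cneg by auto
    have yG: "y \<in> Gc P" using y cls_sub one0_G by blast
    have ny: "negp P y = mu P (int m) (1,0)" unfolding mu_def negp_def im yc by simp
    have "cls (negp P y) = negp P ` cls (1,0)" using negcls[OF yG] yU by simp
    then have "cls (negp P y) \<subseteq> mu P (int m) ` cls (1,0)"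
      using mult_cls[OF m1 one0_G] UT ny by simp
    moreover have "(-1, 0) \<in> cls (negp P y)"
    proof -
      have "negp P (1,0) = (-1, 0)" unfolding negp_def by simp
      then show ?thesis using \<open>cls (negp P y) = negp P ` cls (1,0)\<close> cls_mem[OF one0_G] by (metis image_eqI)
    qed
    ultimately obtain z where "(-1::int) = (- c) * fst z" unfolding mu_def im by auto
    then have "(-c) * (- fst z) = 1" by simp
    moreover have "0 < - c" using cneg by simp
    ultimately have "- c = 1" using pos_zmult_eq_1_iff by blast
    then show ?thesis using yc by simp
  qed
qed

lemma T_cls: "cls (n, 0) \<subseteq> {(n,0), (-n,0)}"
proof (cases "n = 0")
  case True then show ?thesis using cls0 by simp
next
  case False
  have pos: "cls (n, 0) \<subseteq> {(n,0), (-n,0)}" if "n > 0" for n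
  proof -
    define m where "m = nat n"
    have m1: "m \<ge> 1" and im: "int m = n" unfolding m_def using that by auto
    have "mu P (int m) (1,0) = (n,0)" unfolding mu_def im by simp
    then have "cls (n,0) \<subseteq> mu P (int m) ` cls (1,0)"
      using mult_cls[OF m1 one0_G] cls_T[OF one0_G] by simp
    also have "\<dots> \<subseteq> mu P (int m) ` {(1,0), (-1,0)}" using U_sub by blast
    also have "\<dots> = {(n,0), (-n,0)}" unfolding mu_def im by simp
    finally show ?thesis .
  qed
  show ?thesis
  proof (cases "n > 0")
    case True then show ?thesis using pos by simp
  next
    case False
    then have n: "- n > 0" using \<open>n \<noteq> 0\<close> by simp
    have G: "(-n, 0) \<in> Gc P" using P_pos by (simp add: Gc_pair)
    have "negp P (-n, 0) = (n, 0)" unfolding negp_def by simp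
    then have "cls (n, 0) = negp P ` cls (-n, 0)" using negcls[OF G] by simp
    also have "\<dots> \<subseteq> negp P ` {(-n,0), (n,0)}"
    proof -
      have "cls (-n,0) \<subseteq> {(-n,0), (n,0)}" using pos[OF n] by simp
      then show ?thesis by (rule image_mono)
    qed
    also have "\<dots> = {(n,0), (-n,0)}" unfolding negp_def by auto
    finally show ?thesis .
  qed
qed

lemma LV:
  assumes g: "g \<in> Gc P" and g': "g' \<in> cls g"
  shows "(fst g', 0) \<in> cls (fst g, 0) \<and> (0, snd g') \<in> cls (0, snd g)"
proof -
  obtain n k where gnk: "g = (n, k)" by (cases g)
  have kG: "0 \<le> k" "k < P" using g gnk Gc_pair by auto
  have A: "(n, 0) \<in> Gc P" "(0, k) \<in> Gc P" using kG P_pos by (auto simp: Gc_pair)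
  let ?C = "cls (n, 0)" and ?E = "cls (0, k)"
  have "subp P g (n, 0) = (0, k)" unfolding subp_def gnk using kG by simp
  then have "(n,0) \<in> {c\<in>?C. subp P g c \<in> ?E}" using cls_mem A by simp
  then have "cnt P ?C ?E g \<noteq> 0" unfolding cnt_def using cls_fin[OF A(1)] by (auto simp: card_eq_0_iff)
  then have "cnt P ?C ?E g' \<noteq> 0" using cnt_const[OF cls_D[OF A(1)] cls_D[OF A(2)] g g'] by simp
  then obtain c where c: "c \<in> ?C" "subp P g' c \<in> ?E" unfolding cnt_def by (auto simp: card_eq_0_iff)
  have sc: "snd c = 0" using c(1) T_cls[of n] by auto
  have f0: "fst (subp P g' c) = 0" using L_closed[OF A(2)] c by simp
  have g'G: "g' \<in> Gc P" using g g' cls_sub by blast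
  then have "snd (subp P g' c) = snd g'" unfolding subp_def using sc Gc_iff by simp
  then have "subp P g' c = (0, snd g')" using f0 by (simp add: prod_eq_iff)
  moreover have "c = (fst g', 0)" using f0 sc unfolding subp_def by (simp add: prod_eq_iff)
  ultimately show ?thesis using c gnk by auto
qed

lemma LV_abs:
  assumes g: "g \<in> Gc P" and g': "g' \<in> cls g"
  shows "\<bar>fst g'\<bar> = \<bar>fst g\<bar>"
  using LV[OF assms] T_cls[of "fst g"] by auto

end

definition shn :: "nat \<Rightarrow> int \<times> int \<Rightarrow> int \<times> int" where
  "shn j g = (fst g + int j * sgn (fst g), snd g)"

definition Vset :: "(int \<times> int) set" where "Vset = {(1,0), (-1,0)}"

context zsr
begin

lemma sh_Gc: "g \<in> Gc P \<Longrightarrow> sh g \<in> Gc P" unfolding sh_def Gc_def by auto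
lemma shd_Gc: "g \<in> Gc P \<Longrightarrow> shd g \<in> Gc P" unfolding shd_def Gc_def by auto
lemma shn_Gc: "g \<in> Gc P \<Longrightarrow> shn j g \<in> Gc P" unfolding shn_def Gc_def by auto

lemma shd_sh: "fst g \<noteq> 0 \<Longrightarrow> shd (sh g) = g"
  unfolding sh_def shd_def by (cases g) (auto simp: sgn_if)
lemma sh_shd: "\<bar>fst g\<bar> \<ge> 2 \<Longrightarrow> sh (shd g) = g"
  unfolding sh_def shd_def by (cases g) (auto simp: sgn_if)
lemma abs_sh: "fst g \<noteq> 0 \<Longrightarrow> \<bar>fst (sh g)\<bar> = \<bar>fst g\<bar> + 1"
  unfolding sh_def by (auto simp: sgn_if)
lemma abs_shd: "fst g \<noteq> 0 \<Longrightarrow> \<bar>fst (shd g)\<bar> = \<bar>fst g\<bar> - 1"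
  unfolding shd_def by (auto simp: sgn_if)

lemma cardV:
  assumes g: "g \<in> Gc P"
  shows "card {v\<in>Vset. subp P g v \<in> Xc} =
    (if (fst g - 1, snd g) \<in> Xc then 1 else 0) + (if (fst g + 1, snd g) \<in> Xc then 1 else 0)"
proof -
  have s2: "snd g mod P = snd g" using g Gc_iff by simp
  have e1: "subp P g (1,0) = (fst g - 1, snd g)" unfolding subp_def using s2 by simp
  have e2: "subp P g (-1,0) = (fst g + 1, snd g)" unfolding subp_def using s2 by simp
  have "{v\<in>Vset. subp P g v \<in> Xc} = (if (fst g - 1, snd g) \<in> Xc then {(1,0)} else {}) \<union>
        (if (fst g + 1, snd g) \<in> Xc then {(-1,0)} else {})"
    unfolding Vset_def using e1 e2 by auto
  then show ?thesis by auto
qed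

lemma card_filter_Un:
  assumes "finite A" "finite B" "A \<inter> B = {}"
  shows "card {v\<in>A \<union> B. Q v} = card {v\<in>A. Q v} + card {v\<in>B. Q v}"
proof -
  have "{v\<in>A \<union> B. Q v} = {v\<in>A. Q v} \<union> {v\<in>B. Q v}" by auto
  then show ?thesis using assms by (simp add: card_Un_disjoint disjoint_iff)
qed

lemma cntV_const:
  assumes Xc: "Xc \<in> D" and g: "g \<in> Gc P" and g': "g' \<in> cls g"
  shows "card {v\<in>Vset. subp P g' v \<in> Xc} = card {v\<in>Vset. subp P g v \<in> Xc}"
proof -
  let ?U = "cls (1,0)"
  have UD: "?U \<in> D" using cls_D one0_G by blast
  have U1: "(1,0) \<in> ?U" using cls_mem one0_G by blast
  have UV: "?U \<subseteq> Vset" using U_sub unfolding Vset_def .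
  show ?thesis
  proof (cases "(-1,0) \<in> ?U")
    case True
    then have "?U = Vset" using UV U1 unfolding Vset_def by auto
    then show ?thesis using cnt_const[OF UD Xc g g'] unfolding cnt_def by simp
  next
    case False
    then have Ueq: "?U = {(1,0)}" using UV U1 unfolding Vset_def by auto
    have "negp P (1,0) = (-1,0)" unfolding negp_def by simp
    then have ND: "{(-1,0)} \<in> D" using negcl[OF UD] Ueq by simp
    have Veq: "Vset = {(1,0)} \<union> {(-1,0)}" unfolding Vset_def by auto
    have split: "card {v\<in>Vset. subp P h v \<in> Xc} = cnt P {(1,0)} Xc h + cnt P {(-1,0)} Xc h" for h
      unfolding Veq cnt_def by (rule card_filter_Un) auto
    show ?thesis using split cnt_const[OF UD Xc g g'] cnt_const[OF ND Xc g g'] Ueq by simp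
  qed
qed

lemma valV_up:
  assumes Xc: "\<forall>x\<in>Xc. \<bar>fst x\<bar> = n" and n: "n \<ge> 1" and h: "h \<in> Gc P" "\<bar>fst h\<bar> = n + 1"
  shows "card {v\<in>Vset. subp P h v \<in> Xc} = (if shd h \<in> Xc then 1 else 0)"
proof (cases "fst h > 0")
  case True
  have "shd h = (fst h - 1, snd h)" unfolding shd_def using True by simp
  moreover have "(fst h + 1, snd h) \<notin> Xc"
  proof
    assume "(fst h + 1, snd h) \<in> Xc"
    then have "\<bar>fst h + 1\<bar> = n" using Xc by fastforce
    then show False using h True by simp
  qed
  ultimately show ?thesis using cardV[OF h(1), of Xc] by simp
next
  case False
  have "shd h = (fst h + 1, snd h)" unfolding shd_def using False h n by (simp add: sgn_if)
  moreover have "(fst h - 1, snd h) \<notin> Xc"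
  proof
    assume "(fst h - 1, snd h) \<in> Xc"
    then have "\<bar>fst h - 1\<bar> = n" using Xc by fastforce
    then show False using h False by simp
  qed
  ultimately show ?thesis using cardV[OF h(1), of Xc] by simp
qed

lemma valV_down:
  assumes Xc: "\<forall>x\<in>Xc. \<bar>fst x\<bar> = n + 1" and n: "n \<ge> 1" and h: "h \<in> Gc P" "\<bar>fst h\<bar> = n"
  shows "card {v\<in>Vset. subp P h v \<in> Xc} = (if sh h \<in> Xc then 1 else 0)"
proof (cases "fst h > 0")
  case True
  have "sh h = (fst h + 1, snd h)" unfolding sh_def using True by simp
  moreover have "(fst h - 1, snd h) \<notin> Xc"
  proof
    assume "(fst h - 1, snd h) \<in> Xc"
    then have "\<bar>fst h - 1\<bar> = n + 1" using Xc by fastforce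
    then show False using h True n by simp
  qed
  ultimately show ?thesis using cardV[OF h(1), of Xc] by simp
next
  case False
  have "sh h = (fst h - 1, snd h)" unfolding sh_def using False h n by (simp add: sgn_if)
  moreover have "(fst h + 1, snd h) \<notin> Xc"
  proof
    assume "(fst h + 1, snd h) \<in> Xc"
    then have "\<bar>fst h + 1\<bar> = n + 1" using Xc by fastforce
    then show False using h False n by simp
  qed
  ultimately show ?thesis using cardV[OF h(1), of Xc] by simp
qed

lemma lev_cls: "g \<in> Gc P \<Longrightarrow> \<forall>x\<in>cls g. \<bar>fst x\<bar> = \<bar>fst g\<bar>"
  using LV_abs by blast

lemma sh_closed:
  assumes g: "g \<in> Gc P" and n: "fst g \<noteq> 0"
  shows "closed (sh ` cls g)"
  unfolding closed_def
proof (intro conjI ballI)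
  show "sh ` cls g \<subseteq> Gc P" using cls_sub[OF g] sh_Gc by auto
  let ?n = "\<bar>fst g\<bar>"
  have Xc: "\<forall>x\<in>cls g. \<bar>fst x\<bar> = ?n" using lev_cls[OF g] .
  have n1: "?n \<ge> 1" using n by simp
  fix h h' assume h: "h \<in> sh ` cls g" and h': "h' \<in> cls h"
  obtain x where x: "x \<in> cls g" "h = sh x" using h by auto
  have xG: "x \<in> Gc P" using x cls_sub g by blast
  have fx: "fst x \<noteq> 0" using Xc x n by auto
  have hG: "h \<in> Gc P" using x xG sh_Gc by simp
  have hl: "\<bar>fst h\<bar> = ?n + 1" using abs_sh[OF fx] Xc x by simp
  have h'G: "h' \<in> Gc P" using h' hG cls_sub by blast
  have h'l: "\<bar>fst h'\<bar> = ?n + 1" using LV_abs[OF hG h'] hl by simp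
  have "shd h = x" using x fx shd_sh by simp
  then have "card {v\<in>Vset. subp P h v \<in> cls g} = 1" using valV_up[OF Xc n1 hG hl] x by simp
  then have "card {v\<in>Vset. subp P h' v \<in> cls g} = 1"
    using cntV_const[OF cls_D[OF g] hG h'] by simp
  note C1 = this
  note T = valV_up[OF Xc n1 h'G h'l]
  have "shd h' \<in> cls g"
  proof (rule ccontr)
    assume "shd h' \<notin> cls g"
    then have "card {v\<in>Vset. subp P h' v \<in> cls g} = 0" using T by simp
    then show False using C1 by simp
  qed
  moreover have "sh (shd h') = h'" using h'l n1 sh_shd by simp
  ultimately show "h' \<in> sh ` cls g" by (metis image_eqI)
qed

lemma shd_closed:
  assumes g: "g \<in> Gc P" and n: "\<bar>fst g\<bar> \<ge> 2"
  shows "closed (shd ` cls g)"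
  unfolding closed_def
proof (intro conjI ballI)
  show "shd ` cls g \<subseteq> Gc P" using cls_sub[OF g] shd_Gc by auto
  define m where "m = \<bar>fst g\<bar> - 1"
  have Xc: "\<forall>x\<in>cls g. \<bar>fst x\<bar> = m + 1" using lev_cls[OF g] unfolding m_def by simp
  have m1: "m \<ge> 1" using n unfolding m_def by simp
  fix h h' assume h: "h \<in> shd ` cls g" and h': "h' \<in> cls h"
  obtain x where x: "x \<in> cls g" "h = shd x" using h by auto
  have xG: "x \<in> Gc P" using x cls_sub g by blast
  have fx: "fst x \<noteq> 0" using Xc x m1 by auto
  have hG: "h \<in> Gc P" using x xG shd_Gc by simp
  have hl: "\<bar>fst h\<bar> = m" using abs_shd[OF fx] Xc x by simp
  have h'G: "h' \<in> Gc P" using h' hG cls_sub by blast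
  have h'l: "\<bar>fst h'\<bar> = m" using LV_abs[OF hG h'] hl by simp
  have "\<bar>fst x\<bar> \<ge> 2" using Xc x m1 by simp
  then have "sh h = x" using x sh_shd by simp
  then have "card {v\<in>Vset. subp P h v \<in> cls g} = 1" using valV_down[OF Xc m1 hG hl] x by simp
  then have "card {v\<in>Vset. subp P h' v \<in> cls g} = 1"
    using cntV_const[OF cls_D[OF g] hG h'] by simp
  note C1 = this
  note T = valV_down[OF Xc m1 h'G h'l]
  have "sh h' \<in> cls g"
  proof (rule ccontr)
    assume "sh h' \<notin> cls g"
    then have "card {v\<in>Vset. subp P h' v \<in> cls g} = 0" using T by simp
    then show False using C1 by simp
  qed
  moreover have "shd (sh h') = h'" using h'l m1 shd_sh by auto
  ultimately show "h' \<in> shd ` cls g" by (metis image_eqI)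
qed

lemma cls_sh:
  assumes g: "g \<in> Gc P" and n: "fst g \<noteq> 0"
  shows "cls (sh g) = sh ` cls g"
proof
  have shG: "sh g \<in> Gc P" using sh_Gc g by simp
  show "cls (sh g) \<subseteq> sh ` cls g"
  proof
    fix y assume y: "y \<in> cls (sh g)"
    have "sh g \<in> sh ` cls g" using cls_mem[OF g] by blast
    then show "y \<in> sh ` cls g" using sh_closed[OF g n] y unfolding closed_def by blast
  qed
  have l2: "\<bar>fst (sh g)\<bar> \<ge> 2" using abs_sh[OF n] n by simp
  have "shd (sh g) = g" using shd_sh n by simp
  then have "g \<in> shd ` cls (sh g)" using cls_mem[OF shG] by (metis image_eqI)
  then have "cls g \<subseteq> shd ` cls (sh g)"
    using shd_closed[OF shG l2] unfolding closed_def by blast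
  then have "sh ` cls g \<subseteq> sh ` shd ` cls (sh g)" by (rule image_mono)
  also have "\<dots> = cls (sh g)"
  proof -
    have "\<forall>x\<in>cls (sh g). \<bar>fst x\<bar> \<ge> 2" using lev_cls[OF shG] l2 by simp
    then show ?thesis using sh_shd by (simp add: image_image)
  qed
  finally show "sh ` cls g \<subseteq> cls (sh g)" .
qed

end

context zsr
begin

lemma shn_Suc: "fst g \<noteq> 0 \<Longrightarrow> shn (Suc j) g = sh (shn j g)"
  unfolding shn_def sh_def by (auto simp: sgn_if algebra_simps)

lemma shn_fst_ne: "fst g \<noteq> 0 \<Longrightarrow> fst (shn j g) \<noteq> 0"
  unfolding shn_def by (auto simp: sgn_if)

lemma shn0: "shn 0 g = g" unfolding shn_def by simp

lemma cls_shn: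
  assumes g: "g \<in> Gc P" and n: "fst g \<noteq> 0"
  shows "cls (shn j g) = shn j ` cls g"
proof (induction j)
  case 0 then show ?case by (simp add: shn0)
next
  case (Suc j)
  have G: "shn j g \<in> Gc P" using shn_Gc g by simp
  have "cls (shn (Suc j) g) = cls (sh (shn j g))" using shn_Suc n by simp
  also have "\<dots> = sh ` cls (shn j g)" using cls_sh[OF G shn_fst_ne[OF n]] .
  also have "\<dots> = sh ` shn j ` cls g" using Suc.IH by simp
  also have "\<dots> = shn (Suc j) ` cls g"
  proof -
    have "\<forall>x\<in>cls g. fst x \<noteq> 0" using lev_cls[OF g] n by auto
    then show ?thesis using shn_Suc by (auto simp: image_image)
  qed
  finally show ?case .
qed

lemma shn_inj:
  assumes "fst x \<noteq> 0" "fst y \<noteq> 0" "shn j x = shn j y"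
  shows "x = y"
proof -
  have s: "snd x = snd y" using assms unfolding shn_def by simp
  have e: "fst x + int j * sgn (fst x) = fst y + int j * sgn (fst y)"
    using assms unfolding shn_def by simp
  have "fst x = fst y"
  proof (cases "fst x > 0")
    case True
    show ?thesis
    proof (cases "fst y > 0")
      case True then show ?thesis using e \<open>fst x > 0\<close> by simp
    next
      case False
      then have "fst y < 0" using assms by simp
      then show ?thesis using e \<open>fst x > 0\<close> by simp
    qed
  next
    case False
    then have x0: "fst x < 0" using assms by simp
    show ?thesis
    proof (cases "fst y > 0")
      case True then show ?thesis using e x0 by simp
    next
      case False
      then have "fst y < 0" using assms by simp
      then show ?thesis using e x0 by simp
    qed
  qed
  then show ?thesis using s by (simp add: prod_eq_iff)
qed

lemma sg_Gc: "sg P e u g \<in> Gc P"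
  unfolding sg_def Gc_def using P_pos by auto

lemma sg_sh: "e \<in> {1, -1} \<Longrightarrow> sg P e u (sh g) = sh (sg P e u g)"
  unfolding sg_def sh_def by (auto simp: sgn_mult algebra_simps)

lemma sg_shd: "e \<in> {1, -1} \<Longrightarrow> sg P e u (shd g) = shd (sg P e u g)"
  unfolding sg_def shd_def by (auto simp: sgn_mult algebra_simps)

lemma sg_negp: "negp P (sg P e u g) = sg P e u (negp P g)"
proof -
  have "(- ((u * snd g) mod P)) mod P = (u * ((- snd g) mod P)) mod P"
    by (simp add: mod_minus_eq mod_mult_right_eq)
  then show ?thesis unfolding negp_def sg_def by simp
qed

lemma sg_comp: "sg P e u (sg P e' u' g) = sg P (e * e') (u * u') g"
  unfolding sg_def by (simp add: mod_mult_right_eq mult.assoc)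

lemma sg_id: "g \<in> Gc P \<Longrightarrow> sg P 1 1 g = g"
  unfolding sg_def Gc_def by (cases g) auto

lemma sg_fst: "fst (sg P e u g) = e * fst g" unfolding sg_def by simp

lemma mu_sg0: "fst g = 0 \<Longrightarrow> mu P m g = sg P 1 m g"
  unfolding mu_def sg_def by simp

lemma mu_shn:
  assumes "m \<ge> 1" "fst g \<noteq> 0"
  shows "mu P (int m) g = shn ((m - 1) * nat \<bar>fst g\<bar>) (sg P 1 (int m) g)"
proof -
  have "int ((m - 1) * nat \<bar>fst g\<bar>) * sgn (fst g) = (int m - 1) * fst g"
    using assms by (auto simp: sgn_if of_nat_diff)
  then show ?thesis unfolding mu_def shn_def sg_def by (simp add: algebra_simps)
qed

lemma key_sub:
  assumes m: "m \<ge> (1::nat)" and cop: "coprime (int m) P" and g: "g \<in> Gc P"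
  shows "cls (sg P 1 (int m) g) \<subseteq> sg P 1 (int m) ` cls g"
proof (cases "fst g = 0")
  case True
  have "cls (mu P (int m) g) \<subseteq> mu P (int m) ` cls g" using mult_cls[OF m g] cop by simp
  moreover have "\<forall>x\<in>cls g. fst x = 0" using L_closed[OF g True] by blast
  ultimately show ?thesis using mu_sg0 True by (metis (no_types, lifting) image_cong)
next
  case False
  define j where "j = (m - 1) * nat \<bar>fst g\<bar>"
  have lv: "\<forall>x\<in>cls g. \<bar>fst x\<bar> = \<bar>fst g\<bar>" using lev_cls[OF g] .
  have sgG: "sg P 1 (int m) g \<in> Gc P" by (rule sg_Gc)
  have f1: "fst (sg P 1 (int m) g) \<noteq> 0" using False sg_fst by simp
  have "cls (mu P (int m) g) \<subseteq> mu P (int m) ` cls g" using mult_cls[OF m g] cop by simp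
  moreover have "mu P (int m) g = shn j (sg P 1 (int m) g)" using mu_shn[OF m False] j_def by simp
  moreover have "mu P (int m) ` cls g = shn j ` sg P 1 (int m) ` cls g"
  proof -
    have "mu P (int m) x = shn j (sg P 1 (int m) x)" if "x \<in> cls g" for x
    proof -
      have "fst x \<noteq> 0" "\<bar>fst x\<bar> = \<bar>fst g\<bar>" using lv that False by auto
      then show ?thesis using mu_shn[OF m, of x] j_def by simp
    qed
    then show ?thesis by (auto simp: image_image)
  qed
  ultimately have sub: "shn j ` cls (sg P 1 (int m) g) \<subseteq> shn j ` sg P 1 (int m) ` cls g"
    using cls_shn[OF sgG f1] by simp
  show ?thesis
  proof
    fix x assume x: "x \<in> cls (sg P 1 (int m) g)"
    then have "shn j x \<in> shn j ` sg P 1 (int m) ` cls g" using sub by blast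
    then obtain z where z: "z \<in> cls g" "shn j x = shn j (sg P 1 (int m) z)" by auto
    have fx: "fst x \<noteq> 0" using LV_abs[OF sgG x] f1 by auto
    have fz: "fst (sg P 1 (int m) z) \<noteq> 0" using lv z False sg_fst by auto
    have "x = sg P 1 (int m) z" using shn_inj[OF fx fz z(2)] .
    then show "x \<in> sg P 1 (int m) ` cls g" using z by blast
  qed
qed

lemma coprime_small: "0 < u \<Longrightarrow> u < P \<Longrightarrow> coprime u P"
proof -
  assume u: "0 < u" "u < P"
  have "\<not> P dvd u" using u zdvd_not_zless by blast
  then have "coprime P u" using P_prime by (simp add: prime_imp_coprime)
  then show ?thesis by (simp add: coprime_commute)
qed

lemma inverse_exists:
  assumes "0 < u" "u < P"
  shows "\<exists>v. 0 < v \<and> v < P \<and> (u * v) mod P = 1"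
proof -
  obtain x where x: "[u * x = 1] (mod P)" using cong_solve_coprime_int coprime_small[OF assms] by blast
  define v where "v = x mod P"
  have uv: "(u * v) mod P = 1"
    using x P_gt1 unfolding v_def cong_def by (simp add: mod_mult_right_eq)
  have "0 \<le> v" "v < P" unfolding v_def using P_pos by auto
  moreover have "v \<noteq> 0" using uv P_gt1 by auto
  ultimately have "0 < v \<and> v < P \<and> (u * v) mod P = 1" using uv by auto
  then show ?thesis by blast
qed

lemma sg_inv:
  assumes "(u * v) mod P = 1" "g \<in> Gc P"
  shows "sg P 1 v (sg P 1 u g) = g"
proof -
  have "sg P 1 v (sg P 1 u g) = sg P 1 (v * u) g" by (simp add: sg_comp)
  also have "\<dots> = g"
  proof -
    have "(v * u * snd g) mod P = ((v * u) mod P * snd g) mod P" by (simp add: mod_mult_left_eq)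
    also have "\<dots> = snd g mod P" using assms(1) by (simp add: mult.commute)
    also have "\<dots> = snd g" using assms(2) Gc_iff by simp
    finally show ?thesis unfolding sg_def by (simp add: prod_eq_iff)
  qed
  finally show ?thesis .
qed

lemma key:
  assumes u: "0 < u" "u < P" and g: "g \<in> Gc P"
  shows "cls (sg P 1 u g) = sg P 1 u ` cls g"
proof -
  obtain v where v: "0 < v" "v < P" "(u * v) mod P = 1" using inverse_exists[OF u] by blast
  have vu: "(v * u) mod P = 1" using v by (simp add: mult.commute)
  have ks: "cls (sg P 1 w h) \<subseteq> sg P 1 w ` cls h" if "0 < w" "w < P" "h \<in> Gc P" for w h
  proof -
    have "nat w \<ge> 1" "int (nat w) = w" using that by auto
    then show ?thesis using key_sub[of "nat w" h] coprime_small[OF that(1,2)] that(3) by simp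
  qed
  have A: "cls (sg P 1 u g) \<subseteq> sg P 1 u ` cls g" using ks u g by blast
  have "cls g = cls (sg P 1 v (sg P 1 u g))" using sg_inv[OF v(3) g] by simp
  also have "\<dots> \<subseteq> sg P 1 v ` cls (sg P 1 u g)" using ks[OF v(1,2) sg_Gc] .
  finally have B: "cls g \<subseteq> sg P 1 v ` cls (sg P 1 u g)" .
  show ?thesis
  proof
    show "cls (sg P 1 u g) \<subseteq> sg P 1 u ` cls g" using A .
    show "sg P 1 u ` cls g \<subseteq> cls (sg P 1 u g)"
    proof
      fix y assume "y \<in> sg P 1 u ` cls g"
      then obtain x where x: "x \<in> cls g" "y = sg P 1 u x" by auto
      obtain a where a: "a \<in> cls (sg P 1 u g)" "x = sg P 1 v a" using B x by auto
      have aG: "a \<in> Gc P" using a cls_sub sg_Gc by blast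
      have "y = a" using x a sg_inv[OF vu aG] by simp
      then show "y \<in> cls (sg P 1 u g)" using a by simp
    qed
  qed
qed

lemma perm:
  assumes e: "e \<in> {1, -1}" and u: "0 < u" "u < P" and g: "g \<in> Gc P"
  shows "cls (sg P e u g) = sg P e u ` cls g"
proof (cases "e = 1")
  case True then show ?thesis using key[OF u g] by simp
next
  case False
  then have e1: "e = -1" using e by simp
  have u': "0 < P - u" "P - u < P" using u by auto
  have eq: "sg P (-1) u x = negp P (sg P 1 (P - u) x)" for x
  proof -
    have "(- (((P - u) * snd x) mod P)) mod P = (- ((P - u) * snd x)) mod P"
      by (simp add: mod_minus_eq)
    also have "\<dots> = (u * snd x - P * snd x) mod P" by (simp add: algebra_simps)
    also have "\<dots> = (u * snd x) mod P" by (simp add: mod_diff_right_eq[symmetric])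
    finally show ?thesis unfolding negp_def sg_def by simp
  qed
  have "cls (sg P e u g) = cls (negp P (sg P 1 (P - u) g))" using e1 eq by simp
  also have "\<dots> = negp P ` cls (sg P 1 (P - u) g)" using negcls sg_Gc by blast
  also have "\<dots> = negp P ` sg P 1 (P - u) ` cls g" using key[OF u' g] by simp
  also have "\<dots> = sg P e u ` cls g" using e1 eq by (simp add: image_image)
  finally show ?thesis .
qed

end

context zsr
begin

definition good :: "int \<Rightarrow> int \<Rightarrow> bool" where
  "good e u \<longleftrightarrow> e \<in> {1, -1} \<and> 0 < u \<and> u < P \<and> (e, u) \<in> cls (1,1)"

lemma G11: "(1::int, 1::int) \<in> Gc P" using P_gt1 by (simp add: Gc_pair)
lemma G01: "(0::int, 1::int) \<in> Gc P" using P_gt1 by (simp add: Gc_pair)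

lemma X1_props:
  assumes x: "x \<in> cls (1,1)"
  shows "\<bar>fst x\<bar> = 1" "snd x \<noteq> 0" "(0, snd x) \<in> cls (0,1)" "(fst x, 0) \<in> cls (1,0)"
    "good (fst x) (snd x)"
proof -
  show a: "\<bar>fst x\<bar> = 1" using LV_abs[OF G11 x] by simp
  show b: "snd x \<noteq> 0"
  proof
    assume "snd x = 0"
    moreover have xG: "x \<in> Gc P" using x cls_sub G11 by blast
    ultimately have "cls x \<subseteq> Tset" using cls_T by blast
    moreover have "cls x = cls (1,1)" using cls_same[OF G11 x] .
    ultimately show False using cls_mem[OF G11] unfolding Tset_def by auto
  qed
  show "(0, snd x) \<in> cls (0,1)" "(fst x, 0) \<in> cls (1,0)" using LV[OF G11 x] by auto
  have xG: "x \<in> Gc P" using x cls_sub G11 by blast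
  have "fst x \<in> {1, -1}" using a by auto
  moreover have "0 < snd x" "snd x < P" using b xG Gc_iff by auto
  ultimately show "good (fst x) (snd x)" unfolding good_def using x by simp
qed

lemma good_e: "good e u \<Longrightarrow> e \<in> {1, -1}" unfolding good_def by simp
lemma good_u: "good e u \<Longrightarrow> 0 < u \<and> u < P" unfolding good_def by simp
lemma good_X1: "good e u \<Longrightarrow> (e, u) \<in> cls (1,1)" unfolding good_def by simp
lemma good11: "good 1 1" unfolding good_def using P_gt1 cls_mem[OF G11] by simp

lemma fix0:
  assumes gd: "good e u" and g: "g \<in> Gc P" "fst g = 0"
  shows "sg P e u g \<in> cls g"
proof -
  obtain k where gk: "g = (0, k)" using g by (cases g) auto
  have k: "0 \<le> k" "k < P" using g gk Gc_pair by auto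
  show ?thesis
  proof (cases "k = 0")
    case True
    then have "sg P e u g = g" unfolding gk sg_def by simp
    then show ?thesis using cls_mem[OF g(1)] by simp
  next
    case False
    then have k0: "0 < k" using k by simp
    have "sg P 1 k (0,1) = g" unfolding gk sg_def using k by simp
    then have cg: "cls g = sg P 1 k ` cls (0,1)" using key[OF k0 k(2) G01] by simp
    have "(0, u) \<in> cls (0,1)" using X1_props(3)[OF good_X1[OF gd]] by simp
    moreover have "sg P e u g = sg P 1 k (0, u)" unfolding gk sg_def by (simp add: mult.commute)
    ultimately show ?thesis using cg by simp
  qed
qed

lemma negp_pos:
  assumes "0 \<le> k" "k < P"
  shows "negp P (1, (- k) mod P) = (-1, k)" "(1, (- k) mod P) \<in> Gc P"
proof -
  show "negp P (1, (- k) mod P) = (-1, k)" unfolding negp_def using assms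
    by (simp add: mod_minus_eq)
  show "(1, (- k) mod P) \<in> Gc P" using P_pos by (simp add: Gc_pair)
qed

lemma fix1:
  assumes gd: "good e u" and g: "g \<in> Gc P" "\<bar>fst g\<bar> = 1"
  shows "sg P e u g \<in> cls g"
proof -
  have e: "e \<in> {1, -1}" using good_e[OF gd] .
  have pos: "sg P e u (1, k) \<in> cls (1, k)" if k: "0 \<le> k" "k < P" for k
  proof (cases "k = 0")
    case True
    have "(e, 0) \<in> cls (1,0)" using X1_props(4)[OF good_X1[OF gd]] by simp
    moreover have "sg P e u (1, k) = (e, 0)" unfolding sg_def True by simp
    ultimately show ?thesis using True by simp
  next
    case False
    then have k0: "0 < k" using k by simp
    have "sg P 1 k (1,1) = (1, k)" unfolding sg_def using k by simp
    then have cg: "cls (1,k) = sg P 1 k ` cls (1,1)" using key[OF k0 k(2) G11] by simp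
    have "sg P e u (1, k) = sg P 1 k (e, u)" unfolding sg_def by (simp add: mult.commute)
    then show ?thesis using cg good_X1[OF gd] by simp
  qed
  obtain a k where gk: "g = (a, k)" by (cases g)
  have k: "0 \<le> k" "k < P" using g gk Gc_pair by auto
  show ?thesis
  proof (cases "a = 1")
    case True then show ?thesis using pos[OF k] gk by simp
  next
    case False
    then have a: "a = -1" using g gk by auto
    let ?h = "(1::int, (- k) mod P)"
    have hG: "?h \<in> Gc P" and gn: "negp P ?h = g" using negp_pos[OF k] gk a by auto
    have hk: "0 \<le> (- k) mod P" "(- k) mod P < P" using P_pos by auto
    have "sg P e u g = negp P (sg P e u ?h)" using gn sg_negp by metis
    moreover have "sg P e u ?h \<in> cls ?h" using pos[OF hk] .
    ultimately have "sg P e u g \<in> negp P ` cls ?h" by simp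
    then show ?thesis using negcls[OF hG] gn by simp
  qed
qed

lemma fix_lev:
  assumes gd: "good e u"
  shows "\<forall>g\<in>Gc P. \<bar>fst g\<bar> = int n + 1 \<longrightarrow> sg P e u g \<in> cls g"
proof (induction n)
  case 0 then show ?case using fix1[OF gd] by simp
next
  case (Suc n)
  show ?case
  proof (intro ballI impI)
    fix g assume g: "g \<in> Gc P" "\<bar>fst g\<bar> = int (Suc n) + 1"
    let ?h = "shd g"
    have f0: "fst g \<noteq> 0" using g by auto
    have hG: "?h \<in> Gc P" using shd_Gc g by simp
    have hl: "\<bar>fst ?h\<bar> = int n + 1" using abs_shd[OF f0] g by simp
    have hf: "fst ?h \<noteq> 0" using hl by auto
    have gh: "sh ?h = g" using sh_shd g by simp
    have "sg P e u ?h \<in> cls ?h" using Suc.IH hG hl by blast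
    then have "sh (sg P e u ?h) \<in> sh ` cls ?h" by blast
    moreover have "sh (sg P e u ?h) = sg P e u g" using sg_sh[OF good_e[OF gd]] gh by metis
    moreover have "cls g = sh ` cls ?h" using cls_sh[OF hG hf] gh by simp
    ultimately show "sg P e u g \<in> cls g" by simp
  qed
qed

lemma fix_all:
  assumes gd: "good e u" and g: "g \<in> Gc P"
  shows "sg P e u g \<in> cls g"
proof (cases "fst g = 0")
  case True then show ?thesis using fix0[OF gd g] by simp
next
  case False
  define n where "n = nat (\<bar>fst g\<bar> - 1)"
  have "\<bar>fst g\<bar> = int n + 1" unfolding n_def using False by simp
  then show ?thesis using fix_lev[OF gd, of n] g by blast
qed

end

context zsr
begin

lemma trans0:
  assumes g: "g \<in> Gc P" "fst g = 0" and g': "g' \<in> cls g"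
  shows "\<exists>e u. good e u \<and> sg P e u g = g'"
proof -
  obtain k where gk: "g = (0, k)" using g by (cases g) auto
  have k: "0 \<le> k" "k < P" using g gk Gc_pair by auto
  show ?thesis
  proof (cases "k = 0")
    case True
    then have "g' = g" using g' gk cls0 by simp
    then show ?thesis using good11 sg_id[OF g(1)] by blast
  next
    case False
    then have k0: "0 < k" using k by simp
    have "sg P 1 k (0,1) = g" unfolding gk sg_def using k by simp
    then have cg: "cls g = sg P 1 k ` cls (0,1)" using key[OF k0 k(2) G01] by simp
    then obtain w where w: "w \<in> cls (0,1)" "g' = sg P 1 k w" using g' by auto
    have w1: "fst w = 0" using L_closed[OF G01 _ w(1)] by simp
    have wG: "w \<in> Gc P" using w cls_sub G01 by blast
    obtain w2 where w2: "w = (0, w2)" using w1 by (cases w) auto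
    have w2r: "0 \<le> w2" "w2 < P" using wG w2 Gc_pair by auto
    have w20: "w2 \<noteq> 0"
    proof
      assume "w2 = 0"
      then have "(0,1) \<in> cls (0,0)" using cls_sym[OF G01 w(1)] w2 by simp
      then show False using cls0 by simp
    qed
    let ?X = "cls (1::int, 1::int)"
    have XD: "?X \<in> D" using cls_D G11 by blast
    have c1: "card {v\<in>Vset. subp P (0,1) v \<in> ?X} =
      (if (-1, 1) \<in> ?X then 1 else 0) + (if (1, 1) \<in> ?X then 1 else 0)"
      using cardV[OF G01, of ?X] by simp
    have c2: "card {v\<in>Vset. subp P w v \<in> ?X} =
      (if (-1, w2) \<in> ?X then 1 else 0) + (if (1, w2) \<in> ?X then 1 else 0)"
      using cardV[OF wG, of ?X] w2 by simp
    have eqc: "card {v\<in>Vset. subp P w v \<in> ?X} = card {v\<in>Vset. subp P (0,1) v \<in> ?X}"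
      using cntV_const[OF XD G01 w(1)] .
    have in11: "(1,1) \<in> ?X" using cls_mem[OF G11] .
    have "\<exists>e. e \<in> {1, -1} \<and> (e, w2) \<in> ?X"
    proof (rule ccontr)
      assume "\<not> ?thesis"
      then have n1: "(-1, w2) \<notin> ?X" "(1, w2) \<notin> ?X" by auto
      have "card {v\<in>Vset. subp P w v \<in> ?X} = 0" using c2 n1 by simp
      moreover have "card {v\<in>Vset. subp P (0,1) v \<in> ?X} \<ge> 1" using c1 in11 by simp
      ultimately show False using eqc by linarith
    qed
    then obtain e where e: "e \<in> {1, -1}" "(e, w2) \<in> ?X" by blast
    have gd: "good e w2" unfolding good_def using e w2r w20 by simp
    have "sg P e w2 g = g'" unfolding gk w(2) w2 sg_def by (simp add: mult.commute)
    then show ?thesis using gd by blast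
  qed
qed

lemma trans10:
  assumes g': "g' \<in> cls (1,0)"
  shows "\<exists>e u. good e u \<and> sg P e u (1,0) = g'"
proof -
  have "g' \<in> {(1,0), (-1,0)}" using U_sub g' by blast
  then consider "g' = (1,0)" | "g' = (-1,0)" by blast
  then show ?thesis
  proof cases
    case 1 then show ?thesis using good11 sg_id[OF one0_G] by blast
  next
    case 2
    let ?X = "cls (1::int, 1::int)" and ?Y = "cls (0::int, P - 1)"
    have G': "(0, P - 1) \<in> Gc P" using P_pos by (simp add: Gc_pair)
    have XD: "?X \<in> D" using cls_D G11 by blast
    have YD: "?Y \<in> D" using cls_D G' by blast
    have "subp P (1,0) (1,1) = (0, P - 1)" unfolding subp_def using P_gt1
      by (simp add: zmod_minus1)
    then have "(1,1) \<in> {c\<in>?X. subp P (1,0) c \<in> ?Y}" using cls_mem[OF G11] cls_mem[OF G'] by simp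
    then have "cnt P ?X ?Y (1,0) \<noteq> 0" unfolding cnt_def using cls_fin[OF G11]
      by (auto simp: card_eq_0_iff)
    then have "cnt P ?X ?Y (-1,0) \<noteq> 0" using cnt_const[OF XD YD one0_G] g' 2 by simp
    then obtain c where c: "c \<in> ?X" "subp P (-1,0) c \<in> ?Y" unfolding cnt_def
      by (auto simp: card_eq_0_iff)
    have "fst (subp P (-1,0) c) = 0" using L_closed[OF G' _ c(2)] by simp
    then have fc: "fst c = -1" unfolding subp_def by simp
    have gd: "good (fst c) (snd c)" using X1_props(5)[OF c(1)] .
    have "sg P (fst c) (snd c) (1,0) = (-1, 0)" unfolding sg_def fc by simp
    then show ?thesis using gd 2 by metis
  qed
qed

lemma trans1:
  assumes g: "g \<in> Gc P" "\<bar>fst g\<bar> = 1" and g': "g' \<in> cls g"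
  shows "\<exists>e u. good e u \<and> sg P e u g = g'"
proof -
  have pos: "\<exists>e u. good e u \<and> sg P e u (1, k) = h'" if k: "0 \<le> k" "k < P" and h': "h' \<in> cls (1,k)"
    for k h'
  proof (cases "k = 0")
    case True then show ?thesis using trans10 h' by simp
  next
    case False
    then have k0: "0 < k" using k by simp
    have "sg P 1 k (1,1) = (1, k)" unfolding sg_def using k by simp
    then have cg: "cls (1,k) = sg P 1 k ` cls (1,1)" using key[OF k0 k(2) G11] by simp
    then obtain x where x: "x \<in> cls (1,1)" "h' = sg P 1 k x" using h' by auto
    have gd: "good (fst x) (snd x)" using X1_props(5)[OF x(1)] .
    have "sg P (fst x) (snd x) (1, k) = h'" unfolding x(2) sg_def by (simp add: mult.commute)
    then show ?thesis using gd by blast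
  qed
  obtain a k where gk: "g = (a, k)" by (cases g)
  have k: "0 \<le> k" "k < P" using g gk Gc_pair by auto
  show ?thesis
  proof (cases "a = 1")
    case True then show ?thesis using pos[OF k] gk g' by simp
  next
    case False
    then have a: "a = -1" using g gk by auto
    let ?h = "(1::int, (- k) mod P)"
    have hG: "?h \<in> Gc P" and gn: "negp P ?h = g" using negp_pos[OF k] gk a by auto
    have hk: "0 \<le> (- k) mod P" "(- k) mod P < P" using P_pos by auto
    have "g' \<in> negp P ` cls ?h" using negcls[OF hG] gn g' by simp
    then obtain h' where h': "h' \<in> cls ?h" "g' = negp P h'" by auto
    obtain e u where eu: "good e u" "sg P e u ?h = h'" using pos[OF hk h'(1)] by blast
    have "sg P e u g = negp P (sg P e u ?h)" using gn sg_negp by metis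
    then have "sg P e u g = g'" using eu h' by simp
    then show ?thesis using eu by blast
  qed
qed

lemma trans_lev:
  "\<forall>g\<in>Gc P. \<bar>fst g\<bar> = int n + 1 \<longrightarrow> (\<forall>g'\<in>cls g. \<exists>e u. good e u \<and> sg P e u g = g')"
proof (induction n)
  case 0 then show ?case using trans1 by simp
next
  case (Suc n)
  show ?case
  proof (intro ballI impI)
    fix g g' assume g: "g \<in> Gc P" "\<bar>fst g\<bar> = int (Suc n) + 1" and g': "g' \<in> cls g"
    let ?h = "shd g"
    have f0: "fst g \<noteq> 0" using g by auto
    have hG: "?h \<in> Gc P" using shd_Gc g by simp
    have hl: "\<bar>fst ?h\<bar> = int n + 1" using abs_shd[OF f0] g by simp
    have hf: "fst ?h \<noteq> 0" using hl by auto
    have gh: "sh ?h = g" using sh_shd g by simp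
    have "cls g = sh ` cls ?h" using cls_sh[OF hG hf] gh by simp
    then obtain h' where h': "h' \<in> cls ?h" "g' = sh h'" using g' by auto
    obtain e u where eu: "good e u" "sg P e u ?h = h'" using Suc.IH hG hl h'(1) by blast
    have "sg P e u g = sh (sg P e u ?h)" using sg_sh[OF good_e[OF eu(1)]] gh by metis
    then have "sg P e u g = g'" using eu h' by simp
    then show "\<exists>e u. good e u \<and> sg P e u g = g'" using eu by blast
  qed
qed

theorem zsr_main:
  assumes g: "g \<in> Gc P" and g': "g' \<in> cls g"
  shows "\<exists>e u. e \<in> {1, -1} \<and> 0 < u \<and> u < P \<and> sg P e u g = g' \<and> (\<forall>h\<in>Gc P. sg P e u h \<in> cls h)"
proof -
  have "\<exists>e u. good e u \<and> sg P e u g = g'"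
  proof (cases "fst g = 0")
    case True show ?thesis by (rule trans0[OF g True g'])
  next
    case False
    define n where "n = nat (\<bar>fst g\<bar> - 1)"
    have "\<bar>fst g\<bar> = int n + 1" unfolding n_def using False by simp
    then show ?thesis using trans_lev[of n] g g' by simp
  qed
  then obtain e u where eu: "good e u" "sg P e u g = g'" by blast
  have "\<forall>h\<in>Gc P. sg P e u h \<in> cls h" using fix_all[OF eu(1)] by simp
  moreover have "e \<in> {1, -1}" using good_e[OF eu(1)] .
  moreover have "0 < u \<and> u < P" using good_u[OF eu(1)] .
  ultimately show ?thesis using eu(2) by blast
qed

end

lemma ZxZp_group: "group (ZxZp p)"
  unfolding ZxZp_def by (intro DirProd_group group_integer_group group_integer_mod_group)

lemma ZxZp_carrier: "p > 0 \<Longrightarrow> carrier (ZxZp p) = Gc (int p)"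
  unfolding ZxZp_def Gc_def by (simp add: carrier_integer_mod_group)

lemma ZxZp_mult: "x \<otimes>\<^bsub>ZxZp p\<^esub> y = (fst x + fst y, (snd x + snd y) mod int p)"
  unfolding ZxZp_def by (simp add: mult_DirProd')

lemma ZxZp_one: "\<one>\<^bsub>ZxZp p\<^esub> = (0, 0)"
  unfolding ZxZp_def by simp

lemma ZxZp_inv: "p > 0 \<Longrightarrow> x \<in> carrier (ZxZp p) \<Longrightarrow> inv\<^bsub>ZxZp p\<^esub> x = negp (int p) x"
proof -
  assume p: "p > 0" and x: "x \<in> carrier (ZxZp p)"
  obtain a k where xk: "x = (a, k)" by (cases x)
  have k: "k \<in> carrier (integer_mod_group p)" using x xk unfolding ZxZp_def by simp
  have "inv\<^bsub>ZxZp p\<^esub> x = (inv\<^bsub>integer_group\<^esub> a, inv\<^bsub>integer_mod_group p\<^esub> k)"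
    unfolding ZxZp_def xk by (rule inv_DirProd) (use k in auto)
  then show ?thesis using k unfolding negp_def xk by simp
qed

lemma span_const:
  assumes part: "partition_on A D" and x: "x \<in> schur_span TYPE('f::field) D"
    and W: "W \<in> D" and g: "g \<in> W" "g' \<in> W"
  shows "(x :: 'g \<Rightarrow> 'f) g = x g'"
proof -
  obtain Cs c where Cs: "finite Cs" "Cs \<subseteq> D" and xe: "x = (\<lambda>g. \<Sum>C\<in>Cs. c C * class_sum C g)"
    using x unfolding schur_span_def by blast
  have val: "x h = (if W \<in> Cs then c W else 0)" if h: "h \<in> W" for h
  proof -
    have "x h = (\<Sum>C\<in>Cs. if C = W then c W else 0)"
      unfolding xe
    proof (rule sum.cong[OF refl])
      fix C assume C: "C \<in> Cs"
      have "h \<in> C \<longleftrightarrow> C = W"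
        using part C Cs W h unfolding partition_on_def disjoint_def by blast
      then show "c C * class_sum C h = (if C = W then c W else 0)"
        unfolding class_sum_def by auto
    qed
    also have "\<dots> = (if W \<in> Cs then c W else 0)" using Cs(1) by simp
    finally show ?thesis .
  qed
  show ?thesis using val g by simp
qed

lemma class_prod_cnt:
  assumes p: "p > 0" and C: "C \<subseteq> Gc (int p)" "finite C" and E: "E \<subseteq> Gc (int p)" "finite E"
    and g: "g \<in> Gc (int p)"
  shows "(class_prod (ZxZp p) C E g :: 'f::field) = of_nat (cnt (int p) C E g)"
proof -
  let ?P = "int p"
  have inner: "(\<Sum>d\<in>E. if c \<otimes>\<^bsub>ZxZp p\<^esub> d = g then (1::'f) else 0) =
      (if subp ?P g c \<in> E then 1 else 0)" if c: "c \<in> C" for c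
  proof -
    have eq: "c \<otimes>\<^bsub>ZxZp p\<^esub> d = g \<longleftrightarrow> d = subp ?P g c" if d: "d \<in> E" for d
    proof -
      have dG: "0 \<le> snd d" "snd d < ?P" using d E by (auto simp: Gc_def)
      have gG: "0 \<le> snd g" "snd g < ?P" using g by (auto simp: Gc_def)
      have "(snd c + snd d) mod ?P = snd g \<longleftrightarrow> snd d = (snd g - snd c) mod ?P"
      proof -
        have "(snd c + snd d) mod ?P = snd g \<longleftrightarrow> (snd c + snd d) mod ?P = snd g mod ?P"
          using gG by simp
        also have "\<dots> \<longleftrightarrow> ?P dvd (snd c + snd d) - snd g" by (rule mod_eq_dvd_iff)
        also have "\<dots> \<longleftrightarrow> ?P dvd snd d - (snd g - snd c)" by (simp add: algebra_simps)
        also have "\<dots> \<longleftrightarrow> snd d mod ?P = (snd g - snd c) mod ?P" by (rule mod_eq_dvd_iff[symmetric])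
        also have "\<dots> \<longleftrightarrow> snd d = (snd g - snd c) mod ?P" using dG by simp
        finally show ?thesis .
      qed
      then show ?thesis unfolding ZxZp_mult subp_def by (auto simp: prod_eq_iff)
    qed
    have "(\<Sum>d\<in>E. if c \<otimes>\<^bsub>ZxZp p\<^esub> d = g then (1::'f) else 0) =
          (\<Sum>d\<in>E. if d = subp ?P g c then 1 else 0)"
      by (rule sum.cong[OF refl]) (simp add: eq)
    also have "\<dots> = (if subp ?P g c \<in> E then 1 else 0)" using E(2) by simp
    finally show ?thesis .
  qed
  have "class_prod (ZxZp p) C E g = (\<Sum>c\<in>C. (if subp ?P g c \<in> E then (1::'f) else 0))"
    unfolding class_prod_def using inner by simp
  also have "\<dots> = (\<Sum>c\<in>{c\<in>C. subp ?P g c \<in> E}. (1::'f))"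
    using sum.inter_filter[OF C(2), of "\<lambda>_. (1::'f)" "\<lambda>c. subp ?P g c \<in> E"] by simp
  also have "\<dots> = of_nat (cnt ?P C E g)" unfolding cnt_def by simp
  finally show ?thesis .
qed


definition bfm :: "int \<Rightarrow> int \<Rightarrow> int \<times> int \<Rightarrow> int \<times> int" where
  "bfm P j x = (fst x, (snd x + fst x * j) mod P)"
definition bim :: "int \<Rightarrow> int \<Rightarrow> int \<times> int \<Rightarrow> int \<times> int" where
  "bim P j x = (fst x, (snd x - fst x * j) mod P)"
definition tf :: "int \<Rightarrow> int \<Rightarrow> int \<Rightarrow> int \<Rightarrow> int \<times> int \<Rightarrow> int \<times> int" where
  "tf P j e u x = (e * fst x, (u * snd x + (e - u) * j * fst x) mod P)"

lemma bim_Gc: "P > 0 \<Longrightarrow> bim P j x \<in> Gc P" unfolding bim_def Gc_def by auto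
lemma bfm_Gc: "P > 0 \<Longrightarrow> bfm P j x \<in> Gc P" unfolding bfm_def Gc_def by auto

lemma bfm_bim: "x \<in> Gc P \<Longrightarrow> bfm P j (bim P j x) = x"
proof -
  assume x: "x \<in> Gc P"
  have "((snd x - fst x * j) mod P + fst x * j) mod P = snd x mod P" by (simp add: mod_add_left_eq)
  also have "\<dots> = snd x" using x unfolding Gc_def by auto
  finally show ?thesis unfolding bfm_def bim_def by (simp add: prod_eq_iff)
qed

lemma bim_bfm: "x \<in> Gc P \<Longrightarrow> bim P j (bfm P j x) = x"
proof -
  assume x: "x \<in> Gc P"
  have "((snd x + fst x * j) mod P - fst x * j) mod P = snd x mod P" by (simp add: mod_diff_left_eq)
  also have "\<dots> = snd x" using x unfolding Gc_def by auto
  finally show ?thesis unfolding bfm_def bim_def by (simp add: prod_eq_iff)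
qed

lemma bim_inj: "inj_on (bim P j) (Gc P)"
  by (rule inj_onI) (metis bfm_bim)

lemma subp_bim: "subp P (bim P j g) (bim P j c) = bim P j (subp P g c)"
proof -
  have "((snd g - fst g * j) mod P - (snd c - fst c * j) mod P) mod P
      = ((snd g - fst g * j) - (snd c - fst c * j)) mod P" by (simp add: mod_diff_eq)
  also have "\<dots> = ((snd g - snd c) - (fst g - fst c) * j) mod P" by (simp add: algebra_simps)
  also have "\<dots> = ((snd g - snd c) mod P - (fst g - fst c) * j) mod P" by (simp add: mod_diff_left_eq)
  finally show ?thesis unfolding subp_def bim_def by simp
qed

lemma negp_bim: "negp P (bim P j x) = bim P j (negp P x)"
proof -
  have "(- ((snd x - fst x * j) mod P)) mod P = (- (snd x - fst x * j)) mod P" by (simp add: mod_minus_eq)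
  also have "\<dots> = (- snd x - (- fst x) * j) mod P" by (simp add: algebra_simps)
  also have "\<dots> = ((- snd x) mod P - (- fst x) * j) mod P" by (rule mod_diff_left_eq[symmetric])
  finally show ?thesis unfolding negp_def bim_def by simp
qed

lemma tf_eq: "tf P j e u x = bfm P j (sg P e u (bim P j x))"
proof -
  have "((u * ((snd x - fst x * j) mod P)) mod P + e * fst x * j) mod P
      = (u * (snd x - fst x * j) + e * fst x * j) mod P"
    by (simp add: mod_add_left_eq mod_mult_right_eq)
  also have "\<dots> = (u * snd x + (e - u) * j * fst x) mod P" by (simp add: algebra_simps)
  finally show ?thesis unfolding tf_def bfm_def sg_def bim_def by simp
qed

lemma snd_bim0: "x \<in> Gc P \<Longrightarrow> snd (bim P j x) = 0 \<longleftrightarrow> snd x = (fst x * j) mod P"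
proof -
  assume x: "x \<in> Gc P"
  have "snd (bim P j x) = 0 \<longleftrightarrow> (snd x - fst x * j) mod P = 0" unfolding bim_def by simp
  also have "\<dots> \<longleftrightarrow> P dvd snd x - fst x * j" by (simp add: dvd_eq_mod_eq_0)
  also have "\<dots> \<longleftrightarrow> snd x mod P = (fst x * j) mod P" by (simp add: mod_eq_dvd_iff)
  also have "\<dots> \<longleftrightarrow> snd x = (fst x * j) mod P" using x unfolding Gc_def by auto
  finally show ?thesis .
qed

lemma Collect_image: "{y \<in> f ` A. Q y} = f ` {x \<in> A. Q (f x)}"
  by auto

lemma cnt_bim:
  assumes C: "C \<subseteq> Gc P" and E: "E \<subseteq> Gc P" and g: "g \<in> Gc P" and P: "P > 0"
  shows "cnt P (bim P j ` C) (bim P j ` E) (bim P j g) = cnt P C E g"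
proof -
  have eq: "{c'\<in>bim P j ` C. subp P (bim P j g) c' \<in> bim P j ` E} = bim P j ` {c\<in>C. subp P g c \<in> E}"
  proof -
    have iff: "subp P (bim P j g) (bim P j c) \<in> bim P j ` E \<longleftrightarrow> subp P g c \<in> E" for c
    proof -
      have sG: "subp P g c \<in> Gc P" unfolding subp_def Gc_def using P by auto
      show ?thesis unfolding subp_bim
        using inj_on_image_mem_iff[OF bim_inj sG E] .
    qed
    have "{c'\<in>bim P j ` C. subp P (bim P j g) c' \<in> bim P j ` E}
        = bim P j ` {c\<in>C. subp P (bim P j g) (bim P j c) \<in> bim P j ` E}" by (rule Collect_image)
    also have "\<dots> = bim P j ` {c\<in>C. subp P g c \<in> E}" by (simp only: iff)
    finally show ?thesis .
  qed
  have "inj_on (bim P j) {c\<in>C. subp P g c \<in> E}" by (rule inj_on_subset[OF bim_inj]) (use C in auto)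
  then show ?thesis unfolding cnt_def eq by (simp add: card_image)
qed

lemma transport:
  fixes P j :: int and D :: "(int \<times> int) set set"
  assumes Pp: "Factorial_Ring.prime P"
    and part: "partition_on (Gc P) D"
    and fin: "\<And>C. C \<in> D \<Longrightarrow> finite C"
    and zero: "{(0,0)} \<in> D"
    and negcl: "\<And>C. C \<in> D \<Longrightarrow> negp P ` C \<in> D"
    and prodc: "\<And>C E W g g'. C \<in> D \<Longrightarrow> E \<in> D \<Longrightarrow> W \<in> D \<Longrightarrow> g \<in> W \<Longrightarrow> g' \<in> W
                 \<Longrightarrow> cnt P C E g = cnt P C E g'"
    and Kcl: "\<And>C x y. C \<in> D \<Longrightarrow> x \<in> C \<Longrightarrow> y \<in> C \<Longrightarrow> snd x = (fst x * j) mod P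
                 \<Longrightarrow> snd y = (fst y * j) mod P"
    and Xs: "Xs \<in> D" and g: "g \<in> Xs" "g' \<in> Xs"
  shows "\<exists>e u. e \<in> {1,-1} \<and> 0 < u \<and> u < P \<and> tf P j e u g = g' \<and> (\<forall>Y\<in>D. \<forall>y\<in>Y. tf P j e u y \<in> Y)"
proof -
  have P0: "P > 0" using Pp prime_gt_1_int by (metis less_trans zero_less_one)
  have Dsub: "C \<subseteq> Gc P" if "C \<in> D" for C using part that unfolding partition_on_def by auto
  let ?b = "bim P j"
  define D' where "D' = (\<lambda>C. ?b ` C) ` D"
  have imG: "?b ` Gc P = Gc P"
  proof
    show "?b ` Gc P \<subseteq> Gc P" using bim_Gc P0 by auto
    show "Gc P \<subseteq> ?b ` Gc P"
    proof
      fix y assume "y \<in> Gc P"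
      then have "y = ?b (bfm P j y)" "bfm P j y \<in> Gc P" using bim_bfm bfm_Gc P0 by auto
      then show "y \<in> ?b ` Gc P" by blast
    qed
  qed
  have z: "zsr P D'"
  proof
    show "Factorial_Ring.prime P" by fact
    show "partition_on (Gc P) D'"
    proof (rule partition_onI)
      have "\<Union> D' = ?b ` \<Union> D" unfolding D'_def by (simp add: image_Union)
      then show "\<Union> D' = Gc P" using partition_onD1[OF part] imG by simp
      fix p q assume pq: "p \<in> D'" "q \<in> D'" "p \<noteq> q"
      then obtain C E where CE: "C \<in> D" "E \<in> D" "p = ?b ` C" "q = ?b ` E" unfolding D'_def by auto
      then have "C \<noteq> E" using pq by auto
      then have "C \<inter> E = {}" using part CE unfolding partition_on_def disjoint_def by blast
      then show "disjnt p q" unfolding disjnt_def CE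
        using inj_on_image_Int[OF bim_inj Dsub[OF CE(1)] Dsub[OF CE(2)]] by simp
    next
      show "{} \<notin> D'" unfolding D'_def using part unfolding partition_on_def by auto
    qed
    show "finite C" if "C \<in> D'" for C using that fin unfolding D'_def by auto
    show "{(0,0)} \<in> D'"
    proof -
      have "?b ` {(0,0)} = {(0,0)}" unfolding bim_def by simp
      then show ?thesis unfolding D'_def using zero by (metis image_eqI)
    qed
    show "negp P ` C \<in> D'" if CD: "C \<in> D'" for C
    proof -
      obtain C0 where C0: "C0 \<in> D" "C = ?b ` C0" using CD unfolding D'_def by auto
      have "negp P ` C = ?b ` (negp P ` C0)" unfolding C0(2) image_image negp_bim by simp
      then show ?thesis unfolding D'_def using negcl[OF C0(1)] by blast
    qed
    show "cnt P C E h = cnt P C E h'" if prem: "C \<in> D'" "E \<in> D'" "W \<in> D'" "h \<in> W" "h' \<in> W" for C E W h h'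
    proof -
      obtain C0 E0 W0 where CEW: "C0 \<in> D" "E0 \<in> D" "W0 \<in> D" "C = ?b ` C0" "E = ?b ` E0" "W = ?b ` W0"
        using prem(1-3) unfolding D'_def by auto
      obtain h0 h0' where hh: "h0 \<in> W0" "h = ?b h0" "h0' \<in> W0" "h' = ?b h0'"
        using prem(4,5) CEW by auto
      have "cnt P C E h = cnt P C0 E0 h0"
        unfolding CEW hh by (rule cnt_bim) (use Dsub CEW hh P0 in auto)
      also have "\<dots> = cnt P C0 E0 h0'" using prodc CEW hh by blast
      also have "\<dots> = cnt P C E h'"
        unfolding CEW hh by (rule cnt_bim[symmetric]) (use Dsub CEW hh P0 in auto)
      finally show ?thesis .
    qed
    show "snd h' = 0" if prem: "C \<in> D'" "h \<in> C" "h' \<in> C" "snd h = 0" for C h h'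
    proof -
      obtain C0 where C0: "C0 \<in> D" "C = ?b ` C0" using prem(1) unfolding D'_def by auto
      obtain x y where xy: "x \<in> C0" "h = ?b x" "y \<in> C0" "h' = ?b y" using prem(2,3) C0 by auto
      have xG: "x \<in> Gc P" "y \<in> Gc P" using Dsub C0 xy by auto
      have "snd x = (fst x * j) mod P" using snd_bim0[OF xG(1)] xy prem(4) by simp
      then have "snd y = (fst y * j) mod P" using Kcl C0 xy by blast
      then show ?thesis using snd_bim0[OF xG(2)] xy by simp
    qed
  qed
  have gG: "g \<in> Gc P" "g' \<in> Gc P" using Dsub Xs g by auto
  have XD': "?b ` Xs \<in> D'" unfolding D'_def using Xs by blast
  have clsb: "zsr.cls D' (?b y) = ?b ` Y" if "Y \<in> D" "y \<in> Y" for Y y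
    using zsr.cls_eq[OF z, of "?b ` Y" "?b y"] that unfolding D'_def by blast
  have bg: "?b g \<in> Gc P" using bim_Gc P0 by simp
  have "?b g' \<in> zsr.cls D' (?b g)" using clsb[OF Xs g(1)] g(2) by blast
  then obtain e u where eu: "e \<in> {1,-1}" "0 < u" "u < P" "sg P e u (?b g) = ?b g'"
    "\<forall>h\<in>Gc P. sg P e u h \<in> zsr.cls D' h"
    using zsr.zsr_main[OF z bg] by blast
  have "tf P j e u g = g'" unfolding tf_eq eu(4) using bfm_bim gG by simp
  moreover have "\<forall>Y\<in>D. \<forall>y\<in>Y. tf P j e u y \<in> Y"
  proof (intro ballI)
    fix Y y assume Y: "Y \<in> D" "y \<in> Y"
    have "?b y \<in> Gc P" using bim_Gc[OF P0] .
    then have "sg P e u (?b y) \<in> zsr.cls D' (?b y)" using eu(5) by blast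
    then have "sg P e u (?b y) \<in> ?b ` Y" using clsb[OF Y] by simp
    then obtain y0 where y0: "y0 \<in> Y" "sg P e u (?b y) = ?b y0" by auto
    have "y0 \<in> Gc P" using Dsub[OF Y(1)] y0(1) by blast
    then have "tf P j e u y = y0" unfolding tf_eq y0(2) by (rule bfm_bim)
    then show "tf P j e u y \<in> Y" using y0 by simp
  qed
  ultimately show ?thesis using eu by blast
qed


lemma modlem: "(u * (a mod P) + b) mod P = (u * a + b) mod (P::int)"
proof -
  have "(u * (a mod P)) mod P = (u * a) mod P" by (rule mod_mult_right_eq)
  then show ?thesis by (rule mod_add_cong[OF _ refl])
qed

lemma tf_Gc: "P > 0 \<Longrightarrow> tf P j e u x \<in> Gc P" unfolding tf_def Gc_def by auto

lemma tf_hom: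
  "tf P j e u (fst x + fst y, (snd x + snd y) mod P) =
   (fst (tf P j e u x) + fst (tf P j e u y), (snd (tf P j e u x) + snd (tf P j e u y)) mod P)"
proof -
  have "(u * ((snd x + snd y) mod P) + (e - u) * j * (fst x + fst y)) mod P
      = (u * (snd x + snd y) + (e - u) * j * (fst x + fst y)) mod P"
    by (rule modlem)
  also have "\<dots> = ((u * snd x + (e - u) * j * fst x) + (u * snd y + (e - u) * j * fst y)) mod P"
    by (simp add: algebra_simps)
  also have "\<dots> = ((u * snd x + (e - u) * j * fst x) mod P + (u * snd y + (e - u) * j * fst y) mod P) mod P"
    by (simp add: mod_add_eq)
  finally show ?thesis unfolding tf_def by (simp add: algebra_simps)
qed

lemma tf_comp: "tf P j e u (tf P j e' u' x) = tf P j (e * e') (u * u') x"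
proof -
  have "(u * ((u' * snd x + (e' - u') * j * fst x) mod P) + (e - u) * j * (e' * fst x)) mod P
      = (u * (u' * snd x + (e' - u') * j * fst x) + (e - u) * j * (e' * fst x)) mod P"
    by (rule modlem)
  also have "\<dots> = (u * u' * snd x + (e * e' - u * u') * j * fst x) mod P"
    by (simp add: algebra_simps)
  finally show ?thesis unfolding tf_def by simp
qed

lemma tf_modu: "tf P j e (u mod P) x = tf P j e u x"
proof -
  have "P dvd ((u mod P) * snd x + (e - u mod P) * j * fst x) - (u * snd x + (e - u) * j * fst x)"
  proof -
    have "((u mod P) * snd x + (e - u mod P) * j * fst x) - (u * snd x + (e - u) * j * fst x)
        = (u mod P - u) * (snd x - j * fst x)" by (simp add: algebra_simps)
    moreover have "P dvd (u mod P - u)" by (simp add: mod_eq_dvd_iff[symmetric])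
    ultimately show ?thesis by simp
  qed
  then show ?thesis unfolding tf_def by (simp add: mod_eq_dvd_iff)
qed

lemma tf_one:
  assumes x: "x \<in> Gc P" and w: "w mod P = 1"
  shows "tf P j 1 w x = x"
proof -
  have "tf P j 1 w x = tf P j 1 (w mod P) x" by (simp add: tf_modu)
  also have "\<dots> = x" using x w unfolding tf_def Gc_def by (cases x) auto
  finally show ?thesis .
qed

lemma tf_11: "x \<in> Gc P \<Longrightarrow> tf P j 1 1 x = x"
  unfolding tf_def Gc_def by (cases x) auto

lemma e_sq: "e \<in> {1, -1::int} \<Longrightarrow> e * e = 1" by auto

lemma tf_inv:
  assumes e: "e \<in> {1, -1}" and uv: "(u * v) mod P = 1" and x: "x \<in> Gc P"
  shows "tf P j e v (tf P j e u x) = x"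
proof -
  have "tf P j e v (tf P j e u x) = tf P j 1 (v * u) x" using tf_comp e_sq[OF e] by simp
  also have "\<dots> = x" using tf_one[OF x] uv by (simp add: mult.commute)
  finally show ?thesis .
qed

lemma AutoGroup_carrier: "carrier (AutoGroup G) = auto G"
  by (simp add: AutoGroup_def BijGroup_def)

lemma AutoGroup_mult:
  "a \<in> auto G \<Longrightarrow> b \<in> auto G \<Longrightarrow> a \<otimes>\<^bsub>AutoGroup G\<^esub> b = compose (carrier G) a b"
  by (simp add: AutoGroup_def BijGroup_def auto_def)

lemma AutoGroup_one: "\<one>\<^bsub>AutoGroup G\<^esub> = (\<lambda>x\<in>carrier G. x)"
  by (simp add: AutoGroup_def BijGroup_def)

lemma tf_auto:
  assumes p: "p > 0" and e: "e \<in> {1, -1}" and uv: "(u * v) mod int p = 1"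
  shows "restrict (tf (int p) j e u) (Gc (int p)) \<in> auto (ZxZp p)"
proof -
  let ?P = "int p" and ?f = "restrict (tf (int p) j e u) (Gc (int p))"
  have P0: "?P > 0" using p by simp
  have car: "carrier (ZxZp p) = Gc ?P" using ZxZp_carrier[OF p] .
  have addG: "(fst x + fst y, (snd x + snd y) mod ?P) \<in> Gc ?P" for x y
    unfolding Gc_def using P0 by auto
  have hom: "?f \<in> hom (ZxZp p) (ZxZp p)"
    unfolding hom_def car
  proof (intro CollectI conjI ballI)
    show "?f \<in> Gc ?P \<rightarrow> Gc ?P" using tf_Gc[OF P0] by auto
    fix x y assume "x \<in> Gc ?P" "y \<in> Gc ?P"
    then show "?f (x \<otimes>\<^bsub>ZxZp p\<^esub> y) = ?f x \<otimes>\<^bsub>ZxZp p\<^esub> ?f y"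
      unfolding ZxZp_mult using addG tf_hom by simp
  qed
  have vu: "(v * u) mod ?P = 1" using uv by (simp add: mult.commute)
  have bij: "bij_betw ?f (Gc ?P) (Gc ?P)"
  proof (rule bij_betw_byWitness[where f' = "tf ?P j e v"])
    show "\<forall>a\<in>Gc ?P. tf ?P j e v (?f a) = a" using tf_inv[OF e uv] by simp
    show "\<forall>a'\<in>Gc ?P. ?f (tf ?P j e v a') = a'" using tf_inv[OF e vu] tf_Gc[OF P0] by simp
    show "?f ` Gc ?P \<subseteq> Gc ?P" using tf_Gc[OF P0] by auto
    show "tf ?P j e v ` Gc ?P \<subseteq> Gc ?P" using tf_Gc[OF P0] by auto
  qed
  show ?thesis unfolding auto_def Bij_def car using hom bij by (simp add: car)
qed


lemma inv_ex:
  assumes P: "Factorial_Ring.prime (P::int)" and u: "0 < u" "u < P"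
  shows "\<exists>v. 0 < v \<and> v < P \<and> (u * v) mod P = 1"
proof -
  have P1: "P > 1" using P prime_gt_1_int by blast
  have "\<not> P dvd u" using u zdvd_not_zless by blast
  then have "coprime P u" using P by (simp add: prime_imp_coprime)
  then have "coprime u P" by (simp add: coprime_commute)
  then obtain x where x: "[u * x = 1] (mod P)" using cong_solve_coprime_int by blast
  define v where "v = x mod P"
  have uv: "(u * v) mod P = 1"
    using x P1 unfolding v_def cong_def by (simp add: mod_mult_right_eq)
  have "0 \<le> v" "v < P" unfolding v_def using P1 by auto
  moreover have "v \<noteq> 0" using uv P1 by auto
  ultimately have "0 < v \<and> v < P \<and> (u * v) mod P = 1" using uv by auto
  then show ?thesis by blast
qed

lemma automorphic_from_TR:
  fixes p :: nat and j :: int and D :: "(int \<times> int) set set"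
  assumes pp: "Factorial_Ring.prime p"
    and part: "partition_on (Gc (int p)) D" and fin: "\<And>C. C \<in> D \<Longrightarrow> finite C"
    and TR: "\<And>Xs g g'. Xs \<in> D \<Longrightarrow> g \<in> Xs \<Longrightarrow> g' \<in> Xs \<Longrightarrow> \<exists>e u. e \<in> {1,-1} \<and> 0 < u \<and> u < int p
               \<and> tf (int p) j e u g = g' \<and> (\<forall>Y\<in>D. \<forall>y\<in>Y. tf (int p) j e u y \<in> Y)"
  shows "automorphic_schur TYPE('f::field) (ZxZp p) D"
proof -
  let ?P = "int p" and ?G = "ZxZp p"
  have p0: "p > 0" using pp prime_gt_0_nat by blast
  have P0: "?P > 0" using p0 by simp
  have Pp: "Factorial_Ring.prime ?P" using pp by simp
  have grp: "group ?G" by (rule ZxZp_group)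
  have AG: "group (AutoGroup ?G)" using group.AutoGroup[OF grp] .
  have car: "carrier ?G = Gc ?P" using ZxZp_carrier[OF p0] .
  have Dsub: "C \<subseteq> Gc ?P" if "C \<in> D" for C using part that unfolding partition_on_def by auto
  define good where "good e u \<longleftrightarrow> e \<in> {1,-1} \<and> 0 < u \<and> u < ?P \<and> (\<forall>Y\<in>D. \<forall>y\<in>Y. tf ?P j e u y \<in> Y)"
    for e u
  define rt where "rt e u = restrict (tf ?P j e u) (Gc ?P)" for e u
  define H where "H = (\<lambda>eu. rt (fst eu) (snd eu)) ` {eu. good (fst eu) (snd eu)}"
  have rt_auto: "rt e u \<in> auto ?G" if gd: "good e u" for e u
  proof -
    have u: "0 < u" "u < ?P" and e: "e \<in> {1,-1}" using gd unfolding good_def by auto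
    obtain v where "0 < v" "v < ?P" "(u * v) mod ?P = 1" using inv_ex[OF Pp u] by blast
    then show ?thesis unfolding rt_def using tf_auto[OF p0 e] by blast
  qed
  have HA: "H \<subseteq> auto ?G" unfolding H_def using rt_auto by auto
  have finH: "finite H"
  proof -
    have "{eu. good (fst eu) (snd eu)} \<subseteq> {1,-1} \<times> {0<..<?P}" unfolding good_def by auto
    then have "finite {eu. good (fst eu) (snd eu)}" by (rule finite_subset) simp
    then show ?thesis unfolding H_def by simp
  qed
  have P1: "?P > 1" using Pp prime_gt_1_int by blast
  have good11: "good 1 1" unfolding good_def using P1 tf_11 Dsub by (auto simp: subset_iff)
  have sub: "subgroup H (AutoGroup ?G)"
  proof (rule group.subgroupI[OF AG])
    show "H \<subseteq> carrier (AutoGroup ?G)" using HA by (simp add: AutoGroup_carrier)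
    show "H \<noteq> {}" unfolding H_def using good11 by auto
    fix a assume a: "a \<in> H"
    then obtain e u where eu: "good e u" "a = rt e u" unfolding H_def by auto
    have e: "e \<in> {1,-1}" and u: "0 < u" "u < ?P" using eu unfolding good_def by auto
    obtain v where v: "0 < v" "v < ?P" "(u * v) mod ?P = 1" using inv_ex[OF Pp u] by blast
    have gv: "good e v"
    proof -
      have "tf ?P j e v y \<in> Y" if Y: "Y \<in> D" "y \<in> Y" for Y y
      proof -
        have inj: "inj_on (tf ?P j e u) Y"
        proof (rule inj_on_inverseI[where g = "tf ?P j e v"])
          fix z assume "z \<in> Y"
          then have "z \<in> Gc ?P" using Dsub Y by blast
          then show "tf ?P j e v (tf ?P j e u z) = z" by (rule tf_inv[OF e v(3)])
        qed
        have "tf ?P j e u ` Y \<subseteq> Y" using eu Y unfolding good_def by auto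
        then have "tf ?P j e u ` Y = Y" using endo_inj_surj fin Y inj by blast
        then have "y \<in> tf ?P j e u ` Y" using Y by simp
        then obtain y0 where y0: "y0 \<in> Y" "y = tf ?P j e u y0" by (rule imageE) blast
        have "y0 \<in> Gc ?P" using Dsub Y y0 by blast
        then have "tf ?P j e v y = y0" using y0 tf_inv[OF e v(3)] by simp
        then show ?thesis using y0 by simp
      qed
      then show ?thesis unfolding good_def using e v by auto
    qed
    have bH: "rt e v \<in> H" unfolding H_def by (rule image_eqI[where x="(e,v)"]) (simp_all add: gv)
    have comp: "rt e v \<otimes>\<^bsub>AutoGroup ?G\<^esub> a = \<one>\<^bsub>AutoGroup ?G\<^esub>"
    proof -
      have "rt e v \<otimes>\<^bsub>AutoGroup ?G\<^esub> a = compose (carrier ?G) (rt e v) (rt e u)"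
        using AutoGroup_mult rt_auto gv eu by metis
      also have "\<dots> = (\<lambda>x\<in>carrier ?G. x)"
        unfolding compose_def rt_def car using tf_inv[OF e v(3)] tf_Gc[OF P0]
        by (intro restrict_ext) auto
      finally show ?thesis by (simp add: AutoGroup_one)
    qed
    have "inv\<^bsub>AutoGroup ?G\<^esub> a = rt e v"
      by (rule group.inv_equality[OF AG comp]) (use HA a bH in \<open>auto simp: AutoGroup_carrier\<close>)
    then show "inv\<^bsub>AutoGroup ?G\<^esub> a \<in> H" using bH by simp
  next
    fix a b assume a: "a \<in> H" and b: "b \<in> H"
    obtain e u where eu: "good e u" "a = rt e u" using a unfolding H_def by auto
    obtain e' u' where eu': "good e' u'" "b = rt e' u'" using b unfolding H_def by auto
    have e: "e * e' \<in> {1,-1}" using eu eu' unfolding good_def by auto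
    have u0: "(u * u') mod ?P \<noteq> 0"
    proof
      assume "(u * u') mod ?P = 0"
      then have "?P dvd u * u'" by auto
      then have "?P dvd u \<or> ?P dvd u'" using Pp prime_dvd_mult_iff by blast
      then show False using eu eu' unfolding good_def using zdvd_not_zless by blast
    qed
    have tfc: "tf ?P j (e * e') ((u * u') mod ?P) x = tf ?P j e u (tf ?P j e' u' x)" for x
      by (simp add: tf_modu tf_comp)
    have m: "0 < (u * u') mod ?P" "(u * u') mod ?P < ?P"
      using u0 P0 pos_mod_sign[of ?P "u * u'"] by auto
    have pres: "\<forall>Y\<in>D. \<forall>y\<in>Y. tf ?P j (e * e') ((u * u') mod ?P) y \<in> Y"
      using eu(1) eu'(1) unfolding good_def tfc by blast
    have g3: "good (e * e') ((u * u') mod ?P)"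
      unfolding good_def using e m pres by blast
    have "a \<otimes>\<^bsub>AutoGroup ?G\<^esub> b = compose (carrier ?G) a b"
      using AutoGroup_mult rt_auto eu eu' by metis
    also have "\<dots> = rt (e * e') ((u * u') mod ?P)"
      unfolding compose_def eu(2) eu'(2) rt_def car tfc using tf_Gc[OF P0]
      by (intro restrict_ext) auto
    moreover have "rt (e * e') ((u * u') mod ?P) \<in> H" unfolding H_def
      by (rule image_eqI[where x="(e * e', (u * u') mod ?P)"]) (simp_all add: g3)
    ultimately show "a \<otimes>\<^bsub>AutoGroup ?G\<^esub> b \<in> H" by simp
  qed
  have eqsp: "schur_span TYPE('f) D = fixed_space TYPE('f) ?G H"
  proof
    show "schur_span TYPE('f) D \<subseteq> fixed_space TYPE('f) ?G H"
    proof
      fix x :: "int \<times> int \<Rightarrow> 'f" assume x: "x \<in> schur_span TYPE('f) D"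
      obtain Cs c where Cs: "finite Cs" "Cs \<subseteq> D" and xe: "x = (\<lambda>g. \<Sum>C\<in>Cs. c C * class_sum C g)"
        using x unfolding schur_span_def by blast
      have supp: "{g. x g \<noteq> 0} \<subseteq> \<Union>Cs"
      proof
        fix g assume "g \<in> {g. x g \<noteq> 0}"
        then have "(\<Sum>C\<in>Cs. c C * class_sum C g) \<noteq> 0" using xe by simp
        then obtain C where "C \<in> Cs" "c C * class_sum C g \<noteq> 0" by (meson sum.neutral)
        then show "g \<in> \<Union>Cs" unfolding class_sum_def by (auto split: if_splits)
      qed
      have "finite (\<Union>Cs)" using Cs fin by auto
      moreover have "\<Union>Cs \<subseteq> carrier ?G" using Cs Dsub car by auto
      ultimately have ga: "x \<in> group_algebra ?G" unfolding group_algebra_def using supp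
        by (auto intro: finite_subset)
      have fx: "x (\<sigma> g) = x g" if s: "\<sigma> \<in> H" and g: "g \<in> carrier ?G" for \<sigma> g
      proof -
        obtain e u where eu: "good e u" "\<sigma> = rt e u" using s unfolding H_def by auto
        have gG: "g \<in> Gc ?P" using g car by simp
        obtain W where W: "W \<in> D" "g \<in> W" using part gG unfolding partition_on_def by auto
        have "\<sigma> g = tf ?P j e u g" using eu gG unfolding rt_def by simp
        moreover have "tf ?P j e u g \<in> W" using eu W unfolding good_def by blast
        ultimately show ?thesis using span_const[OF part x W(1)] W by metis
      qed
      show "x \<in> fixed_space TYPE('f) ?G H" unfolding fixed_space_def using ga fx by blast
    qed
    show "fixed_space TYPE('f) ?G H \<subseteq> schur_span TYPE('f) D"
    proof
      fix x :: "int \<times> int \<Rightarrow> 'f" assume x: "x \<in> fixed_space TYPE('f) ?G H"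
      have ga: "finite {g. x g \<noteq> 0}" "{g. x g \<noteq> 0} \<subseteq> Gc ?P"
        using x car unfolding fixed_space_def group_algebra_def by auto
      have fixd: "x (\<sigma> g) = x g" if "\<sigma> \<in> H" "g \<in> Gc ?P" for \<sigma> g
        using x car that unfolding fixed_space_def by auto
      have const: "x g' = x g" if W: "W \<in> D" "g \<in> W" "g' \<in> W" for W g g'
      proof -
        obtain e u where eu: "e \<in> {1,-1}" "0 < u" "u < ?P" "tf ?P j e u g = g'"
          "\<forall>Y\<in>D. \<forall>y\<in>Y. tf ?P j e u y \<in> Y" using TR[OF W] by blast
        have gd: "good e u" unfolding good_def using eu by blast
        have rH: "rt e u \<in> H" unfolding H_def by (rule image_eqI[where x="(e,u)"]) (simp_all add: gd)
        have gG: "g \<in> Gc ?P" using Dsub W by blast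
        have "rt e u g = g'" unfolding rt_def using gG eu by simp
        then show ?thesis using fixd[OF rH gG] by simp
      qed
      define Cs where "Cs = {C\<in>D. \<exists>g\<in>C. x g \<noteq> 0}"
      define sel where "sel g = (SOME C. C \<in> D \<and> g \<in> C)" for g
      have sel: "sel g \<in> D \<and> g \<in> sel g" if "g \<in> Gc ?P" for g
      proof -
        have "\<exists>C. C \<in> D \<and> g \<in> C" using part that unfolding partition_on_def by auto
        then show ?thesis unfolding sel_def by (rule someI_ex)
      qed
      have disj: "C = C'" if "C \<in> D" "C' \<in> D" "g \<in> C" "g \<in> C'" for C C' g
        using part that unfolding partition_on_def disjoint_def by blast
      have finCs: "finite Cs"
      proof -
        have "Cs \<subseteq> sel ` {g. x g \<noteq> 0}"
        proof
          fix C assume "C \<in> Cs"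
          then obtain g where g: "C \<in> D" "g \<in> C" "x g \<noteq> 0" unfolding Cs_def by auto
          then have "sel g = C" using sel[of g] disj ga(2) by blast
          then show "C \<in> sel ` {g. x g \<noteq> 0}" using g by blast
        qed
        then show ?thesis using ga(1) finite_surj by blast
      qed
      define c where "c C = x (SOME g. g \<in> C)" for C
      have xeq: "x = (\<lambda>g. \<Sum>C\<in>Cs. c C * class_sum C g)"
      proof
        fix g
        show "x g = (\<Sum>C\<in>Cs. c C * class_sum C g)"
        proof (cases "g \<in> Gc ?P")
          case False
          then have "x g = 0" using ga by auto
          moreover have "class_sum C g = 0" if "C \<in> Cs" for C
            using that False Dsub unfolding Cs_def class_sum_def by auto
          then have "(\<Sum>C\<in>Cs. c C * class_sum C g) = 0" by (intro sum.neutral) auto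
          ultimately show ?thesis by simp
        next
          case True
          obtain W where W: "W \<in> D" "g \<in> W" using sel[OF True] by blast
          have "(\<Sum>C\<in>Cs. c C * class_sum C g) = (\<Sum>C\<in>Cs. if C = W then c W else 0)"
          proof (rule sum.cong[OF refl])
            fix C assume C: "C \<in> Cs"
            have "g \<in> C \<longleftrightarrow> C = W" using C W disj unfolding Cs_def by blast
            then show "c C * class_sum C g = (if C = W then c W else 0)"
              unfolding class_sum_def by auto
          qed
          also have "\<dots> = (if W \<in> Cs then c W else 0)" using finCs by simp
          also have "\<dots> = x g"
          proof (cases "W \<in> Cs")
            case True
            have "(SOME g. g \<in> W) \<in> W" using W by (metis someI_ex)
            then have "c W = x g" unfolding c_def using const W by blast
            then show ?thesis using True by simp
          next
            case False
            then have "x g = 0" using W unfolding Cs_def by blast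
            then show ?thesis using False by simp
          qed
          finally show ?thesis by simp
        qed
      qed
      have "Cs \<subseteq> D" unfolding Cs_def by auto
      then show "x \<in> schur_span TYPE('f) D" unfolding schur_span_def using finCs xeq by blast
    qed
  qed
  show ?thesis unfolding automorphic_schur_def using finH sub eqsp by blast
qed


theorem corollary3p5:
  fixes p :: nat and \<D> :: "(int \<times> int) set set"
  assumes "Factorial_Ring.prime p"
    and "schur_partition TYPE('f::field_char_0) (ZxZp p) \<D>"
    and "\<exists>i::int. S_subgroup (ZxZp p) \<D>
           (generate (ZxZp p) {((0, 1) [^]\<^bsub>ZxZp p\<^esub> i) \<otimes>\<^bsub>ZxZp p\<^esub> (1, 0)})"
  shows "automorphic_schur TYPE('f) (ZxZp p) \<D>"
proof -
  let ?P = "int p" and ?G = "ZxZp p"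
  have pp: "Factorial_Ring.prime p" by fact
  have p0: "p > 0" using pp prime_gt_0_nat by blast
  have p1: "p > 1" using pp prime_gt_1_nat by blast
  have P0: "?P > 0" using p0 by simp
  have Pp: "Factorial_Ring.prime ?P" using pp by simp
  have grp: "group ?G" by (rule ZxZp_group)
  have car: "carrier ?G = Gc ?P" using ZxZp_carrier[OF p0] .
  have sp: "partition_on (carrier ?G) \<D>" "\<And>C. C \<in> \<D> \<Longrightarrow> finite C" "{\<one>\<^bsub>?G\<^esub>} \<in> \<D>"
    "\<And>C. C \<in> \<D> \<Longrightarrow> (\<lambda>g. inv\<^bsub>?G\<^esub> g) ` C \<in> \<D>"
    "\<And>C D. C \<in> \<D> \<Longrightarrow> D \<in> \<D> \<Longrightarrow> (class_prod ?G C D :: _ \<Rightarrow> 'f) \<in> schur_span TYPE('f) \<D>"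
    using assms(2) unfolding schur_partition_def by auto
  have part: "partition_on (Gc ?P) \<D>" using sp(1) car by simp
  have Dsub: "C \<subseteq> Gc ?P" if "C \<in> \<D>" for C using part that unfolding partition_on_def by auto
  have zero: "{(0,0)} \<in> \<D>" using sp(3) ZxZp_one by simp
  have negcl: "negp ?P ` C \<in> \<D>" if C: "C \<in> \<D>" for C
  proof -
    have "(\<lambda>g. inv\<^bsub>?G\<^esub> g) ` C = negp ?P ` C"
      using ZxZp_inv[OF p0] Dsub[OF C] car by (intro image_cong) auto
    then show ?thesis using sp(4)[OF C] by simp
  qed
  have prodc: "cnt ?P C E g = cnt ?P C E g'"
    if CEW: "C \<in> \<D>" "E \<in> \<D>" "W \<in> \<D>" "g \<in> W" "g' \<in> W" for C E W g g'
  proof -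
    have gG: "g \<in> Gc ?P" "g' \<in> Gc ?P" using Dsub CEW by auto
    have "(of_nat (cnt ?P C E g) :: 'f) = class_prod ?G C E g"
      by (rule class_prod_cnt[OF p0 Dsub[OF CEW(1)] sp(2)[OF CEW(1)] Dsub[OF CEW(2)] sp(2)[OF CEW(2)] gG(1), symmetric])
    also have "\<dots> = class_prod ?G C E g'"
      using span_const[OF part sp(5)[OF CEW(1,2)] CEW(3-5)] .
    also have "\<dots> = of_nat (cnt ?P C E g')"
      by (rule class_prod_cnt[OF p0 Dsub[OF CEW(1)] sp(2)[OF CEW(1)] Dsub[OF CEW(2)] sp(2)[OF CEW(2)] gG(2)])
    finally show ?thesis by (simp only: of_nat_eq_iff)
  qed
  obtain i :: int where Si: "S_subgroup ?G \<D> (generate ?G {((0, 1) [^]\<^bsub>?G\<^esub> i) \<otimes>\<^bsub>?G\<^esub> (1, 0)})"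
    using assms(3) by blast
  define h where "h = ((0, 1) [^]\<^bsub>?G\<^esub> i) \<otimes>\<^bsub>?G\<^esub> (1::int, 0::int)"
  define j where "j = snd h"
  have hj: "h = (1, j)" "0 \<le> j" "j < ?P"
  proof -
    have L0: "subgroup ({0} \<times> carrier (integer_mod_group p)) ?G"
    proof -
      have "subgroup ({\<one>\<^bsub>integer_group\<^esub>} \<times> carrier (integer_mod_group p)) ?G"
        unfolding ZxZp_def
        by (rule DirProd_subgroups[OF group_integer_group group.triv_subgroup[OF group_integer_group]
              group_integer_mod_group group.subgroup_self[OF group_integer_mod_group]])
      then show ?thesis by simp
    qed
    have "(0::int, 1::int) \<in> {0} \<times> carrier (integer_mod_group p)"
      using p1 by (simp add: carrier_integer_mod_group)
    then have "(0, 1) [^]\<^bsub>?G\<^esub> i \<in> {0} \<times> carrier (integer_mod_group p)"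
      using group.subgroup_int_pow_closed[OF grp L0] by blast
    then obtain k where k: "(0, 1) [^]\<^bsub>?G\<^esub> i = (0, k)" "0 \<le> k" "k < ?P"
      using p0 by (auto simp: carrier_integer_mod_group)
    have "h = (1, k)" unfolding h_def k(1) ZxZp_mult using k by simp
    then show "h = (1, j)" "0 \<le> j" "j < ?P" unfolding j_def using k by auto
  qed
  define Ks where "Ks = {x \<in> Gc ?P. snd x = (fst x * j) mod ?P}"
  have Ksub: "subgroup Ks ?G"
  proof (rule group.subgroupI[OF grp])
    show "Ks \<subseteq> carrier ?G" unfolding Ks_def car by auto
    show "Ks \<noteq> {}" unfolding Ks_def using P0 by (auto intro!: exI[of _ "(0,0)"] simp: Gc_def)
    fix a assume a: "a \<in> Ks"
    then have aG: "a \<in> carrier ?G" unfolding Ks_def car by auto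
    have "(- ((fst a * j) mod ?P)) mod ?P = ((- fst a) * j) mod ?P" by (simp add: mod_minus_eq)
    then show "inv\<^bsub>?G\<^esub> a \<in> Ks" using a unfolding ZxZp_inv[OF p0 aG] Ks_def negp_def Gc_def
      using P0 by auto
  next
    fix a b assume a: "a \<in> Ks" and b: "b \<in> Ks"
    have "((fst a * j) mod ?P + (fst b * j) mod ?P) mod ?P = ((fst a + fst b) * j) mod ?P"
      by (simp add: mod_add_eq distrib_right)
    then show "a \<otimes>\<^bsub>?G\<^esub> b \<in> Ks" using a b unfolding ZxZp_mult Ks_def Gc_def using P0 by auto
  qed
  have hK: "h \<in> Ks" unfolding Ks_def using hj by (simp add: Gc_def)
  have hG: "h \<in> carrier ?G" using hK Ksub subgroup.subset by blast
  have genK: "generate ?G {h} = Ks"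
  proof
    show "generate ?G {h} \<subseteq> Ks" using group.generate_subgroup_incl[OF grp _ Ksub] hK by blast
    have pos: "(int n, (int n * j) mod ?P) \<in> generate ?G {h}" for n
    proof (induction n)
      case 0
      have "\<one>\<^bsub>?G\<^esub> \<in> generate ?G {h}" by (rule generate.one)
      then show ?case using ZxZp_one by simp
    next
      case (Suc n)
      have "(int n, (int n * j) mod ?P) \<otimes>\<^bsub>?G\<^esub> h \<in> generate ?G {h}"
        using Suc generate.incl[of h "{h}" ?G] by (intro generate.eng) auto
      moreover have "(int n, (int n * j) mod ?P) \<otimes>\<^bsub>?G\<^esub> h = (int (Suc n), (int (Suc n) * j) mod ?P)"
        unfolding ZxZp_mult hj(1) by (simp add: mod_add_left_eq mod_add_right_eq distrib_right add.commute)
      ultimately show ?case by simp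
    qed
    show "Ks \<subseteq> generate ?G {h}"
    proof
      fix x assume x: "x \<in> Ks"
      obtain a where xa: "x = (a, (a * j) mod ?P)" using x unfolding Ks_def by (cases x) auto
      show "x \<in> generate ?G {h}"
      proof (cases "a \<ge> 0")
        case True
        then show ?thesis using pos[of "nat a"] xa by simp
      next
        case False
        define y where "y = (int (nat (- a)), (int (nat (- a)) * j) mod ?P)"
        have y: "y \<in> generate ?G {h}" unfolding y_def by (rule pos)
        have yG: "y \<in> carrier ?G" unfolding y_def car Gc_def using P0 by auto
        have "inv\<^bsub>?G\<^esub> y \<in> generate ?G {h}"
          using group.generate_m_inv_closed[OF grp _ y] hG by blast
        moreover have "inv\<^bsub>?G\<^esub> y = x"
        proof -
          have "(- ((- a * j) mod ?P)) mod ?P = (a * j) mod ?P" by (simp add: mod_minus_eq)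
          moreover have "inv\<^bsub>?G\<^esub> y = negp ?P y" by (rule ZxZp_inv[OF p0 yG])
          ultimately show ?thesis unfolding y_def negp_def xa using False by simp
        qed
        ultimately show ?thesis by simp
      qed
    qed
  qed
  obtain Ds where Ds: "Ds \<subseteq> \<D>" "Ks = \<Union>Ds"
    using Si unfolding S_subgroup_def h_def[symmetric] genK by blast
  have Kcl: "snd y = (fst y * j) mod ?P"
    if C: "C \<in> \<D>" "x \<in> C" "y \<in> C" "snd x = (fst x * j) mod ?P" for C x y
  proof -
    have "x \<in> Ks" unfolding Ks_def using C Dsub by auto
    then obtain C0 where C0: "C0 \<in> Ds" "x \<in> C0" using Ds by auto
    have "C0 = C" using part C C0 Ds unfolding partition_on_def disjoint_def by blast
    then have "y \<in> Ks" using C0 Ds C by auto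
    then show ?thesis unfolding Ks_def by simp
  qed
  have TR: "\<exists>e u. e \<in> {1,-1} \<and> 0 < u \<and> u < ?P \<and> tf ?P j e u g = g' \<and> (\<forall>Y\<in>\<D>. \<forall>y\<in>Y. tf ?P j e u y \<in> Y)"
    if "Xs \<in> \<D>" "g \<in> Xs" "g' \<in> Xs" for Xs g g'
    by (rule transport[OF Pp part sp(2) zero negcl prodc Kcl that]) auto
  show ?thesis by (rule automorphic_from_TR[OF pp part sp(2) TR]) auto
qed


end
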